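(* Consider the $K$-class system with dependence on aggregate (marginal) distributions described in the context, with constants $M_R,L_R,L_P,L_Q>0$ and $\gamma\in[0,1)$. Let $\mathbf x_0^{\mathbf N}$ be initial states and $\boldsymbol\mu_0\in\mathcal P(\mathcal X\times[K])$ their empirical joint distribution. Define $S_R=M_R(1+L_Q)+L_R(2+L_Q)$, $S_P=(1+L_Q)+L_P(2+L_Q)$, $C_R=M_R+L_R$, $C_P=2+L_P$, $S_R'=M_R+L_R$, $S_R''=M_RL_Q+L_R(1+L_Q)$, $S_P'=1+L_P$, $S_P''=L_Q+L_P(1+L_Q)$. If $\gamma S_P<1$, then for every policy $\boldsymbol\pi\in\Pi$, $$\begin{aligned}\Big|v^{\mathbf N}(\mathbf x_0^{\mathbf N},\boldsymbol\pi)-v^{\mathrm{MF}}(\boldsymbol\mu_0,\boldsymbol\pi)\Big|\le{}&\frac{C_R}{1-\gamma}\sqrt{|\mathcal U|}\frac1{\sqrt{N_{\mathrm{pop}}}}+\sqrt{|\mathcal X||\mathcal U|}\Big(\frac{\gamma C_P}{1-\gamma}\Big)\Big[\frac{S_R'}{N_{\mathrm{pop}}}\Big(\sum_{k}\sqrt{N_k}\Big)+\frac{S_R''}{\sqrt{N_{\mathrm{pop}}}}\Big]\\&+C_P\Big(\frac{S_R}{S_P-1}\Big)\sqrt{|\mathcal X||\mathcal U|}\Big(\frac{\gamma}{1-\gamma S_P}-\frac{\gamma}{1-\gamma}\Big)\Big[\frac{S_P'}{N_{\mathrm{pop}}}\Big(\sum_k\sqrt{N_k}\Big)+\frac{S_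P''}{\sqrt{N_{\mathrm{pop}}}}\Big].\end{aligned}$$
   Context: Fix $K\ge1$, $N_1,\dots,N_K\ge1$, $[K]=\{1,\dots,K\}$, $N_{\mathrm{pop}}=\sum_kN_k$, finite sets $\mathcal X,\mathcal U$; $\mathcal P(A)$ is the set of probability distributions on $A$, $|\cdot|_1$ the $L_1$ norm. Agent $j\in[N_k]$ of class $k$ has state $x_{j,k}^t$ and action $u_{j,k}^t$. Empirical joint distributions: $\boldsymbol\mu_t^{\mathbf N}(x,k)=\frac1{N_{\mathrm{pop}}}\sum_{j=1}^{N_k}\mathbf 1(x_{j,k}^t=x)$, $\boldsymbol\nu_t^{\mathbf N}(u,k)=\frac1{N_{\mathrm{pop}}}\sum_{j=1}^{N_k}\mathbf 1(u_{j,k}^t=u)$. For $\boldsymbol\mu\in\mathcal P(\mathcal X\times[K])$, $\boldsymbol\nu\in\mathcal P(\mathcal U\times[K])$ the marginals are $\boldsymbol\mu[\mathcal X](x)=\sum_k\boldsymbol\mu(x,k)$, $\boldsymbol\nu[\mathcal U](u)=\sum_k\boldsymbol\nu(u,k)$. For each $k$: $r_k:\mathcal X\times\mathcal U\times\mathcal P(\mathcal X)\times\mathcal P(\mathcal U)\to\mathbb R$, $P_k:\mathcal X\times\mathcal U\times\mathcal P(\mathcal X)\times\mathcal P(\mathcal U)\to\mathcal P(\mathcal X)$ with $|r_k|\le M_R$, $|r_k(x,u,\mu_1,\nu_1)-r_k(x,u,\mu_2,\nu_2)|\le L_R(|\mu_1-\mu_2|_1+|\nu_1-\nu_2|_1)$,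 $|P_k(x,u,\mu_1,\nu_1)-P_k(x,u,\mu_2,\nu_2)|_1\le L_P(|\mu_1-\mu_2|_1+|\nu_1-\nu_2|_1)$ for all $\mu_i\in\mathcal P(\mathcal X),\nu_i\in\mathcal P(\mathcal U)$. A policy $\boldsymbol\pi=\{\boldsymbol\pi_t\}_{t\ge0}$, $\boldsymbol\pi_t=(\pi_k^t)_k$, has decision rules $\pi_k^t:\mathcal X\times\mathcal P(\mathcal X)\to\mathcal P(\mathcal U)$; $\Pi$ is the set of policies with $|\pi_k^t(x,\mu_1)-\pi_k^t(x,\mu_2)|_1\le L_Q|\mu_1-\mu_2|_1$ for all $t,k,x$. Dynamics: conditioned on all states at time $t$, actions are independent across agents with $u_{j,k}^t\sim\pi_k^t(x_{j,k}^t,\boldsymbol\mu_t^{\mathbf N}[\mathcal X])$; conditioned on states and actions, next states are independent with $x_{j,k}^{t+1}\sim P_k(x_{j,k}^t,u_{j,k}^t,\boldsymbol\mu_t^{\mathbf N}[\mathcal X],\boldsymbol\nu_t^{\mathbf N}[\mathcal U])$. Empirical value $v^{\mathbf N}(\mathbf x_0^{\mathbf N},\boldsymbol\pi)=\frac1{N_{\mathrm{pop}}}\sum_k\sum_{j}\mathbb E[\sum_t\gamma^tr_k(x_{j,k}^t,u_{j,k}^t,\boldsymbol\mu_t^{\mathbf N}[\mathcal X],\boldsymbol\nu_t^{\mathbf N}[\mathcal U])]$. Mean-field operators for $\boldsymbol\mu\in\mathcal P(\mathcal X\times[K])$ and decision rules $\boldsymbol\pi=(\pi_k)_k$: $\nu^{\mathrm{MF}}(\boldsymbol\mu,\boldsymbol\pi)(u,k)=\sum_x\pi_k(x,\boldsymbol\mu[\mathcal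 X])(u)\boldsymbol\mu(x,k)$; $P^{\mathrm{MF}}(\boldsymbol\mu,\boldsymbol\pi)(x',k)=\sum_{x,u}\boldsymbol\mu(x,k)\pi_k(x,\boldsymbol\mu[\mathcal X])(u)P_k(x,u,\boldsymbol\mu[\mathcal X],\nu^{\mathrm{MF}}(\boldsymbol\mu,\boldsymbol\pi)[\mathcal U])(x')$; $r_k^{\mathrm{MF}}(\boldsymbol\mu,\boldsymbol\pi)=\sum_{x,u}\boldsymbol\mu(x,k)\pi_k(x,\boldsymbol\mu[\mathcal X])(u)r_k(x,u,\boldsymbol\mu[\mathcal X],\nu^{\mathrm{MF}}(\boldsymbol\mu,\boldsymbol\pi)[\mathcal U])$. With $\boldsymbol\mu_{t+1}=P^{\mathrm{MF}}(\boldsymbol\mu_t,\boldsymbol\pi_t)$, $v^{\mathrm{MF}}(\boldsymbol\mu_0,\boldsymbol\pi)=\sum_k\sum_{t\ge0}\gamma^tr_k^{\mathrm{MF}}(\boldsymbol\mu_t,\boldsymbol\pi_t)$. *)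

theory Defs
  imports "HOL-Probability.Probability"
begin

definition agents :: "nat \<Rightarrow> (nat \<Rightarrow> nat) \<Rightarrow> (nat \<times> nat) set" where
  "agents K N = {(j,k). k < K \<and> j < N k}"

definition Npop :: "nat \<Rightarrow> (nat \<Rightarrow> nat) \<Rightarrow> nat" where
  "Npop K N = (\<Sum>k<K. N k)"

definition l1 :: "'a::finite pmf \<Rightarrow> 'a pmf \<Rightarrow> real" where
  "l1 p q = (\<Sum>a\<in>UNIV. \<bar>pmf p a - pmf q a\<bar>)"

definition emp :: "'b set \<Rightarrow> ('b \<Rightarrow> 'a) \<Rightarrow> 'a pmf" where
  "emp A f = map_pmf f (pmf_of_set A)"

definition act_dist ::
  "nat \<Rightarrow> (nat \<Rightarrow> nat) \<Rightarrow> (nat \<Rightarrow> nat \<Rightarrow> 'x \<Rightarrow> 'x pmf \<Rightarrow> 'u pmf) \<Rightarrow> nat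
   \<Rightarrow> (nat \<times> nat \<Rightarrow> 'x) \<Rightarrow> (nat \<times> nat \<Rightarrow> 'u) pmf" where
  "act_dist K N pol t xs =
     Pi_pmf (agents K N) undefined (\<lambda>a. pol t (snd a) (xs a) (emp (agents K N) xs))"

definition next_dist ::
  "nat \<Rightarrow> (nat \<Rightarrow> nat) \<Rightarrow> (nat \<Rightarrow> 'x \<Rightarrow> 'u \<Rightarrow> 'x pmf \<Rightarrow> 'u pmf \<Rightarrow> 'x pmf)
   \<Rightarrow> (nat \<times> nat \<Rightarrow> 'x) \<Rightarrow> (nat \<times> nat \<Rightarrow> 'u) \<Rightarrow> (nat \<times> nat \<Rightarrow> 'x) pmf" where
  "next_dist K N P xs us =
     Pi_pmf (agents K N) undefined
       (\<lambda>a. P (snd a) (xs a) (us a) (emp (agents K N) xs) (emp (agents K N) us))"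

primrec state_dist ::
  "nat \<Rightarrow> (nat \<Rightarrow> nat) \<Rightarrow> (nat \<Rightarrow> 'x \<Rightarrow> 'u \<Rightarrow> 'x pmf \<Rightarrow> 'u pmf \<Rightarrow> 'x pmf)
   \<Rightarrow> (nat \<Rightarrow> nat \<Rightarrow> 'x \<Rightarrow> 'x pmf \<Rightarrow> 'u pmf) \<Rightarrow> (nat \<times> nat \<Rightarrow> 'x) \<Rightarrow> nat
   \<Rightarrow> (nat \<times> nat \<Rightarrow> 'x) pmf" where
  "state_dist K N P pol x0 0 = return_pmf x0"
| "state_dist K N P pol x0 (Suc t) =
     bind_pmf (state_dist K N P pol x0 t)
       (\<lambda>xs. bind_pmf (act_dist K N pol t xs) (\<lambda>us. next_dist K N P xs us))"

definition emp_value ::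
  "nat \<Rightarrow> (nat \<Rightarrow> nat) \<Rightarrow> (nat \<Rightarrow> 'x \<Rightarrow> 'u \<Rightarrow> 'x pmf \<Rightarrow> 'u pmf \<Rightarrow> real)
   \<Rightarrow> (nat \<Rightarrow> 'x \<Rightarrow> 'u \<Rightarrow> 'x pmf \<Rightarrow> 'u pmf \<Rightarrow> 'x pmf)
   \<Rightarrow> (nat \<Rightarrow> nat \<Rightarrow> 'x \<Rightarrow> 'x pmf \<Rightarrow> 'u pmf) \<Rightarrow> real \<Rightarrow> (nat \<times> nat \<Rightarrow> 'x) \<Rightarrow> real" where
  "emp_value K N r P pol \<gamma> x0 =
     (1 / real (Npop K N)) *
     (\<Sum>a\<in>agents K N. \<Sum>t. \<gamma> ^ t *
        measure_pmf.expectation (state_dist K N P pol x0 t) (\<lambda>xs.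
          measure_pmf.expectation (act_dist K N pol t xs) (\<lambda>us.
            r (snd a) (xs a) (us a) (emp (agents K N) xs) (emp (agents K N) us))))"

definition nu_MF ::
  "(nat \<Rightarrow> 'x \<Rightarrow> 'x pmf \<Rightarrow> 'u pmf) \<Rightarrow> ('x \<times> nat) pmf \<Rightarrow> ('u \<times> nat) pmf" where
  "nu_MF d mu = bind_pmf mu (\<lambda>(x,k). map_pmf (\<lambda>u. (u,k)) (d k x (map_pmf fst mu)))"

definition P_MF ::
  "(nat \<Rightarrow> 'x \<Rightarrow> 'u \<Rightarrow> 'x pmf \<Rightarrow> 'u pmf \<Rightarrow> 'x pmf) \<Rightarrow> (nat \<Rightarrow> 'x \<Rightarrow> 'x pmf \<Rightarrow> 'u pmf)
   \<Rightarrow> ('x \<times> nat) pmf \<Rightarrow> ('x \<times> nat) pmf" where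
  "P_MF P d mu = bind_pmf mu (\<lambda>(x,k). bind_pmf (d k x (map_pmf fst mu)) (\<lambda>u.
      map_pmf (\<lambda>x'. (x',k)) (P k x u (map_pmf fst mu) (map_pmf fst (nu_MF d mu)))))"

definition r_MF ::
  "(nat \<Rightarrow> 'x::finite \<Rightarrow> 'u::finite \<Rightarrow> 'x pmf \<Rightarrow> 'u pmf \<Rightarrow> real) \<Rightarrow> (nat \<Rightarrow> 'x \<Rightarrow> 'x pmf \<Rightarrow> 'u pmf)
   \<Rightarrow> ('x \<times> nat) pmf \<Rightarrow> nat \<Rightarrow> real" where
  "r_MF r d mu k = (\<Sum>x\<in>UNIV. \<Sum>u\<in>UNIV. pmf mu (x,k) * pmf (d k x (map_pmf fst mu)) u *
      r k x u (map_pmf fst mu) (map_pmf fst (nu_MF d mu)))"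

primrec mf_dist ::
  "(nat \<Rightarrow> 'x \<Rightarrow> 'u \<Rightarrow> 'x pmf \<Rightarrow> 'u pmf \<Rightarrow> 'x pmf) \<Rightarrow> (nat \<Rightarrow> nat \<Rightarrow> 'x \<Rightarrow> 'x pmf \<Rightarrow> 'u pmf)
   \<Rightarrow> ('x \<times> nat) pmf \<Rightarrow> nat \<Rightarrow> ('x \<times> nat) pmf" where
  "mf_dist P pol mu0 0 = mu0"
| "mf_dist P pol mu0 (Suc t) = P_MF P (pol t) (mf_dist P pol mu0 t)"

definition mf_value ::
  "nat \<Rightarrow> (nat \<Rightarrow> 'x::finite \<Rightarrow> 'u::finite \<Rightarrow> 'x pmf \<Rightarrow> 'u pmf \<Rightarrow> real)
   \<Rightarrow> (nat \<Rightarrow> 'x \<Rightarrow> 'u \<Rightarrow> 'x pmf \<Rightarrow> 'u pmf \<Rightarrow> 'x pmf)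
   \<Rightarrow> (nat \<Rightarrow> nat \<Rightarrow> 'x \<Rightarrow> 'x pmf \<Rightarrow> 'u pmf) \<Rightarrow> real \<Rightarrow> ('x \<times> nat) pmf \<Rightarrow> real" where
  "mf_value K r P pol \<gamma> mu0 =
     (\<Sum>t. \<gamma> ^ t * (\<Sum>k<K. r_MF r (pol t) (mf_dist P pol mu0 t) k))"

end

theory Submission
  imports Defs
begin

lemma Efin:
  fixes f :: "'a \<Rightarrow> real"
  assumes "finite (set_pmf p)"
  shows "measure_pmf.expectation p f = (\<Sum>a\<in>set_pmf p. pmf p a * f a)"
  using assms by (subst integral_measure_pmf[of "set_pmf p"]) auto

lemma fin_Pi:
  "finite A \<Longrightarrow> (\<And>a. a\<in>A \<Longrightarrow> finite (set_pmf (p a))) \<Longrightarrow> finite (set_pmf (Pi_pmf A d p))"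
  by (simp add: set_Pi_pmf finite_PiE_dflt)

lemma E_pair_mult:
  fixes f :: "'a \<Rightarrow> real" and g :: "'b \<Rightarrow> real"
  assumes "finite (set_pmf p)" "finite (set_pmf q)"
  shows "measure_pmf.expectation (pair_pmf p q) (\<lambda>z. f (fst z) * g (snd z))
       = measure_pmf.expectation p f * measure_pmf.expectation q g"
proof -
  have "measure_pmf.expectation (pair_pmf p q) (\<lambda>z. f (fst z) * g (snd z))
     = (\<Sum>z\<in>set_pmf p \<times> set_pmf q. pmf (pair_pmf p q) z * (f (fst z) * g (snd z)))"
    using assms by (subst Efin) auto
  also have "\<dots> = (\<Sum>(a,b)\<in>set_pmf p \<times> set_pmf q. (pmf p a * f a) * (pmf q b * g b))"
    by (auto simp: pmf_pair intro!: sum.cong)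
  also have "\<dots> = (\<Sum>a\<in>set_pmf p. \<Sum>b\<in>set_pmf q. (pmf p a * f a) * (pmf q b * g b))"
    by (simp add: sum.cartesian_product)
  also have "\<dots> = measure_pmf.expectation p f * measure_pmf.expectation q g"
    using assms by (simp add: Efin sum_product)
  finally show ?thesis .
qed

lemma var_Pi:
  fixes h :: "'a \<Rightarrow> 'b \<Rightarrow> real"
  assumes "finite A" "\<And>a. a\<in>A \<Longrightarrow> measure_pmf.expectation (p a) (h a) = 0"
    and "\<And>a. a\<in>A \<Longrightarrow> finite (set_pmf (p a))"
  shows "measure_pmf.expectation (Pi_pmf A dflt p) (\<lambda>f. (\<Sum>a\<in>A. h a (f a))\<^sup>2)
       = (\<Sum>a\<in>A. measure_pmf.expectation (p a) (\<lambda>y. (h a y)\<^sup>2))"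
  using assms
proof (induction A rule: finite_induct)
  case empty
  then show ?case by simp
next
  case (insert x F)
  have finF: "finite (set_pmf (Pi_pmf F dflt p))" using insert by (intro fin_Pi) auto
  have finx: "finite (set_pmf (p x))" using insert by auto
  have finP: "finite (set_pmf (pair_pmf (p x) (Pi_pmf F dflt p)))" using finF finx by simp
  define S where "S = (\<lambda>f. \<Sum>a\<in>F. h a (f a))"
  have eqF: "(\<Sum>a\<in>F. h a (if a = x then y else f a)) = (\<Sum>a\<in>F. h a (f a))" for y f
    using insert by (intro sum.cong) auto
  have eq: "(\<Sum>a\<in>insert x F. h a ((f(x:=y)) a)) = h x y + S f" for f y
    using insert by (auto simp: S_def intro!: sum.cong)
  have "measure_pmf.expectation (Pi_pmf (insert x F) dflt p) (\<lambda>f. (\<Sum>a\<in>insert x F. h a (f a))\<^sup>2)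
     = measure_pmf.expectation (pair_pmf (p x) (Pi_pmf F dflt p))
          (\<lambda>z. (h x (fst z))\<^sup>2 + 2 * (h x (fst z) * S (snd z)) + (S (snd z))\<^sup>2)"
    using insert by (subst Pi_pmf_insert) (auto simp: case_prod_unfold power2_sum S_def algebra_simps eqF intro!: Bochner_Integration.integral_cong)
  also have "\<dots> = measure_pmf.expectation (pair_pmf (p x) (Pi_pmf F dflt p)) (\<lambda>z. (h x (fst z))\<^sup>2)
     + 2 * measure_pmf.expectation (pair_pmf (p x) (Pi_pmf F dflt p)) (\<lambda>z. h x (fst z) * S (snd z))
     + measure_pmf.expectation (pair_pmf (p x) (Pi_pmf F dflt p)) (\<lambda>z. (S (snd z))\<^sup>2)"
    using finP by (simp add: integrable_measure_pmf_finite)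
  also have "measure_pmf.expectation (pair_pmf (p x) (Pi_pmf F dflt p)) (\<lambda>z. h x (fst z) * S (snd z)) = 0"
    using E_pair_mult[OF finx finF, of "h x" S] insert by simp
  also have "measure_pmf.expectation (pair_pmf (p x) (Pi_pmf F dflt p)) (\<lambda>z. (S (snd z))\<^sup>2)
      = (\<Sum>a\<in>F. measure_pmf.expectation (p a) (\<lambda>y. (h a y)\<^sup>2))"
    using insert expectation_pair_pmf_snd[where f="\<lambda>g. (S g)\<^sup>2" and p="p x" and q="Pi_pmf F dflt p"]
    by (simp add: S_def)
  also have "measure_pmf.expectation (pair_pmf (p x) (Pi_pmf F dflt p)) (\<lambda>z. (h x (fst z))\<^sup>2)
      = measure_pmf.expectation (p x) (\<lambda>y. (h x y)\<^sup>2)"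
    using expectation_pair_pmf_fst[where f="\<lambda>y. (h x y)\<^sup>2" and p="p x" and q="Pi_pmf F dflt p"]
    by simp
  finally show ?case using insert by simp
qed

lemma E_abs_le_sqrt:
  fixes Z :: "'a \<Rightarrow> real"
  assumes "finite (set_pmf p)"
  shows "measure_pmf.expectation p (\<lambda>x. \<bar>Z x\<bar>) \<le> sqrt (measure_pmf.expectation p (\<lambda>x. (Z x)\<^sup>2))"
proof -
  define c where "c = measure_pmf.expectation p (\<lambda>x. \<bar>Z x\<bar>)"
  have "0 \<le> measure_pmf.expectation p (\<lambda>x. (\<bar>Z x\<bar> - c)\<^sup>2)" by simp
  also have "\<dots> = measure_pmf.expectation p (\<lambda>x. (Z x)\<^sup>2) - 2 * c * c + c\<^sup>2"
    using assms by (simp add: power2_diff integrable_measure_pmf_finite c_def)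
  finally have "c\<^sup>2 \<le> measure_pmf.expectation p (\<lambda>x. (Z x)\<^sup>2)" by (simp add: power2_eq_square)
  then show ?thesis unfolding c_def by (rule real_le_rsqrt)
qed


lemma fin_pmf_finite[simp]: "finite (set_pmf (p :: 'b::finite pmf))"
  by simp

lemma conc_coord:
  fixes g :: "'a \<Rightarrow> 'b::finite \<Rightarrow> real"
  assumes A: "finite A" and B: "B \<subseteq> A" and g0: "\<And>a y. a\<in>B \<Longrightarrow> 0 \<le> g a y"
    and g1: "\<And>a y. a\<in>B \<Longrightarrow> g a y \<le> 1"
  shows "measure_pmf.expectation (Pi_pmf A d p)
           (\<lambda>f. \<bar>\<Sum>a\<in>B. (g a (f a) - measure_pmf.expectation (p a) (g a))\<bar>)
         \<le> sqrt (\<Sum>a\<in>B. measure_pmf.expectation (p a) (g a))"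
proof -
  define h where "h a y = (if a \<in> B then g a y - measure_pmf.expectation (p a) (g a) else 0)" for a y
  have sumh: "(\<Sum>a\<in>A. h a (f a)) = (\<Sum>a\<in>B. (g a (f a) - measure_pmf.expectation (p a) (g a)))" for f
  proof -
    have "(\<Sum>a\<in>A. h a (f a)) = (\<Sum>a\<in>A \<inter> B. (g a (f a) - measure_pmf.expectation (p a) (g a)))"
      unfolding h_def using A by (simp add: sum.inter_restrict)
    also have "A \<inter> B = B" using B by auto
    finally show ?thesis .
  qed
  have Eh: "measure_pmf.expectation (p a) (h a) = 0" for a
  proof (cases "a \<in> B")
    case True
    then have "h a = (\<lambda>y. g a y - measure_pmf.expectation (p a) (g a))" by (simp add: h_def fun_eq_iff)
    then show ?thesis by (simp add: integrable_measure_pmf_finite)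
  next
    case False
    then have "h a = (\<lambda>y. 0)" by (simp add: h_def fun_eq_iff)
    then show ?thesis by simp
  qed
  have finPi: "finite (set_pmf (Pi_pmf A d p))" using A by (intro fin_Pi) auto
  have "measure_pmf.expectation (Pi_pmf A d p)
           (\<lambda>f. \<bar>\<Sum>a\<in>B. (g a (f a) - measure_pmf.expectation (p a) (g a))\<bar>)
      = measure_pmf.expectation (Pi_pmf A d p) (\<lambda>f. \<bar>\<Sum>a\<in>A. h a (f a)\<bar>)"
    by (simp add: sumh)
  also have "\<dots> \<le> sqrt (measure_pmf.expectation (Pi_pmf A d p) (\<lambda>f. (\<Sum>a\<in>A. h a (f a))\<^sup>2))"
    by (rule E_abs_le_sqrt[OF finPi])
  also have "measure_pmf.expectation (Pi_pmf A d p) (\<lambda>f. (\<Sum>a\<in>A. h a (f a))\<^sup>2)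
      = (\<Sum>a\<in>A. measure_pmf.expectation (p a) (\<lambda>y. (h a y)\<^sup>2))"
    using A Eh by (intro var_Pi) auto
  also have "\<dots> \<le> (\<Sum>a\<in>B. measure_pmf.expectation (p a) (g a))"
  proof -
    have "(\<Sum>a\<in>A. measure_pmf.expectation (p a) (\<lambda>y. (h a y)\<^sup>2))
        = (\<Sum>a\<in>B. measure_pmf.expectation (p a) (\<lambda>y. (h a y)\<^sup>2))"
      using A B by (intro sum.mono_neutral_right) (auto simp: h_def)
    also have "\<dots> \<le> (\<Sum>a\<in>B. measure_pmf.expectation (p a) (g a))"
    proof (intro sum_mono)
      fix a assume aB: "a \<in> B"
      define c where "c = measure_pmf.expectation (p a) (g a)"
      have "measure_pmf.expectation (p a) (\<lambda>y. (h a y)\<^sup>2)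
          = measure_pmf.expectation (p a) (\<lambda>y. (g a y)\<^sup>2) - 2 * c * c + c\<^sup>2"
        using aB by (simp add: h_def power2_diff integrable_measure_pmf_finite c_def)
      also have "\<dots> \<le> measure_pmf.expectation (p a) (\<lambda>y. (g a y)\<^sup>2)"
        by (simp add: power2_eq_square)
      also have "\<dots> \<le> measure_pmf.expectation (p a) (g a)"
      proof (rule integral_mono)
        show "integrable (measure_pmf (p a)) (\<lambda>y. (g a y)\<^sup>2)" by (simp add: integrable_measure_pmf_finite)
        show "integrable (measure_pmf (p a)) (g a)" by (simp add: integrable_measure_pmf_finite)
        fix y
        have "0 \<le> g a y" "g a y \<le> 1" using aB g0 g1 by auto
        then show "(g a y)\<^sup>2 \<le> g a y" by (simp add: power2_eq_square mult_left_le)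
      qed
      finally show "measure_pmf.expectation (p a) (\<lambda>y. (h a y)\<^sup>2) \<le> measure_pmf.expectation (p a) (g a)" .
    qed
    finally show ?thesis .
  qed
  finally show ?thesis by (simp add: real_sqrt_le_iff)
qed

lemma sum_sqrt_le:
  fixes v :: "'z \<Rightarrow> real"
  assumes "finite Z" "\<And>z. z \<in> Z \<Longrightarrow> 0 \<le> v z"
  shows "(\<Sum>z\<in>Z. sqrt (v z)) \<le> sqrt (real (card Z) * (\<Sum>z\<in>Z. v z))"
proof -
  have "(\<Sum>z\<in>Z. sqrt (v z))\<^sup>2 \<le> (\<Sum>z\<in>Z. (sqrt (v z))\<^sup>2) * card Z"
    by (rule sum_squared_le_sum_of_squares)
  also have "(\<Sum>z\<in>Z. (sqrt (v z))\<^sup>2) = (\<Sum>z\<in>Z. v z)"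
    using assms by (intro sum.cong) auto
  finally show ?thesis by (intro real_le_rsqrt) (simp add: mult.commute)
qed

lemma conc_L1:
  fixes q :: "'a \<Rightarrow> 'b::finite \<Rightarrow> 'z::finite \<Rightarrow> real"
  assumes A: "finite A" and B: "B \<subseteq> A" and q0: "\<And>a y z. a\<in>B \<Longrightarrow> 0 \<le> q a y z"
    and q1: "\<And>a y. a\<in>B \<Longrightarrow> (\<Sum>z\<in>UNIV. q a y z) = 1"
  shows "measure_pmf.expectation (Pi_pmf A d p)
           (\<lambda>f. \<Sum>z\<in>UNIV. \<bar>\<Sum>a\<in>B. (q a (f a) z - measure_pmf.expectation (p a) (\<lambda>y. q a y z))\<bar>)
         \<le> sqrt (real CARD('z) * real (card B))"
proof -
  have finPi: "finite (set_pmf (Pi_pmf A d p))" using A by (intro fin_Pi) auto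
  have qle1: "q a y z \<le> 1" if "a \<in> B" for a y z
  proof -
    have "q a y z \<le> (\<Sum>z\<in>UNIV. q a y z)"
      using that q0 by (intro member_le_sum) auto
    then show ?thesis using q1[OF that] by simp
  qed
  have "measure_pmf.expectation (Pi_pmf A d p)
           (\<lambda>f. \<Sum>z\<in>UNIV. \<bar>\<Sum>a\<in>B. (q a (f a) z - measure_pmf.expectation (p a) (\<lambda>y. q a y z))\<bar>)
      = (\<Sum>z\<in>UNIV. measure_pmf.expectation (Pi_pmf A d p)
           (\<lambda>f. \<bar>\<Sum>a\<in>B. (q a (f a) z - measure_pmf.expectation (p a) (\<lambda>y. q a y z))\<bar>))"
    using finPi by (intro Bochner_Integration.integral_sum) (simp add: integrable_measure_pmf_finite)
  also have "\<dots> \<le> (\<Sum>z\<in>UNIV. sqrt (\<Sum>a\<in>B. measure_pmf.expectation (p a) (\<lambda>y. q a y z)))"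
    by (intro sum_mono conc_coord[OF A B]) (auto simp: q0 qle1)
  also have "\<dots> \<le> sqrt (real CARD('z) * (\<Sum>z\<in>UNIV. \<Sum>a\<in>B. measure_pmf.expectation (p a) (\<lambda>y. q a y z)))"
    by (intro sum_sqrt_le) (auto intro!: sum_nonneg integral_nonneg_AE simp: q0)
  also have "(\<Sum>z\<in>UNIV. \<Sum>a\<in>B. measure_pmf.expectation (p a) (\<lambda>y. q a y z)) = real (card B)"
  proof -
    have "(\<Sum>z\<in>UNIV. \<Sum>a\<in>B. measure_pmf.expectation (p a) (\<lambda>y. q a y z))
        = (\<Sum>a\<in>B. measure_pmf.expectation (p a) (\<lambda>y. \<Sum>z\<in>UNIV. q a y z))"
      by (subst sum.swap) (simp add: integrable_measure_pmf_finite)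
    also have "\<dots> = (\<Sum>a\<in>B. 1)"
      by (intro sum.cong refl) (simp add: q1)
    finally show ?thesis by simp
  qed
  finally show ?thesis .
qed


lemma emp_pmf:
  assumes "finite A" "A \<noteq> {}"
  shows "pmf (emp A f) z = (\<Sum>a\<in>A. if f a = z then 1 else 0) / real (card A)"
proof -
  have "pmf (emp A f) z = real (card (A \<inter> f -` {z})) / real (card A)"
    using assms by (simp add: emp_def pmf_map measure_pmf_of_set)
  also have "A \<inter> f -` {z} = {a\<in>A. f a = z}" by auto
  also have "real (card {a\<in>A. f a = z}) = (\<Sum>a\<in>A. if f a = z then 1 else 0)"
    using assms by (simp add: sum.inter_filter[symmetric])
  finally show ?thesis .
qed

lemma Efin_UNIV:
  fixes f :: "'b::finite \<Rightarrow> real"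
  shows "measure_pmf.expectation p f = (\<Sum>u\<in>UNIV. pmf p u * f u)"
  by (subst integral_measure_pmf[of UNIV]) auto

lemma E_ind: "measure_pmf.expectation p (\<lambda>y. if y = z then 1 else 0 :: real) = pmf p z"
proof -
  have "measure_pmf.expectation p (\<lambda>y. if y = z then 1 else 0 :: real) = (\<Sum>a\<in>{z}. pmf p a * (if a = z then 1 else 0))"
    by (subst integral_measure_pmf_real[of "{z}"]) (auto split: if_splits)
  then show ?thesis by simp
qed

lemma E_Pi_comp:
  fixes g :: "'b \<Rightarrow> real"
  assumes "finite A" "a \<in> A"
  shows "measure_pmf.expectation (Pi_pmf A d p) (\<lambda>f. g (f a)) = measure_pmf.expectation (p a) g"
proof -
  have "measure_pmf.expectation (Pi_pmf A d p) (\<lambda>f. g (f a))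
      = measure_pmf.expectation (map_pmf (\<lambda>f. f a) (Pi_pmf A d p)) g" by simp
  also have "map_pmf (\<lambda>f. f a) (Pi_pmf A d p) = p a" using assms by (simp add: Pi_pmf_component)
  finally show ?thesis .
qed

definition good :: "nat \<Rightarrow> ('x \<times> nat) pmf \<Rightarrow> bool" where
  "good K \<mu> \<longleftrightarrow> (\<forall>z\<in>set_pmf \<mu>. snd z < K)"

lemma E_good:
  fixes f :: "'x::finite \<times> nat \<Rightarrow> 'b::{banach, second_countable_topology}"
  assumes "good K \<mu>"
  shows "measure_pmf.expectation \<mu> f = (\<Sum>k<K. \<Sum>x\<in>UNIV. pmf \<mu> (x,k) *\<^sub>R f (x,k))"
proof -
  have "measure_pmf.expectation \<mu> f = (\<Sum>z\<in>UNIV \<times> {..<K}. pmf \<mu> z *\<^sub>R f z)"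
    using assms by (intro integral_measure_pmf) (auto simp: good_def)
  also have "\<dots> = (\<Sum>x\<in>UNIV. \<Sum>k<K. pmf \<mu> (x,k) *\<^sub>R f (x,k))"
    by (simp add: sum.cartesian_product)
  also have "\<dots> = (\<Sum>k<K. \<Sum>x\<in>UNIV. pmf \<mu> (x,k) *\<^sub>R f (x,k))"
    by (rule sum.swap)
  finally show ?thesis .
qed

lemma pmf_bind_good:
  fixes \<mu> :: "('x::finite \<times> nat) pmf"
  assumes "good K \<mu>"
  shows "pmf (bind_pmf \<mu> g) z = (\<Sum>k<K. \<Sum>x\<in>UNIV. pmf \<mu> (x,k) * pmf (g (x,k)) z)"
  using assms by (simp add: pmf_bind E_good)

lemma marg_good:
  fixes \<mu> :: "('x::finite \<times> nat) pmf"
  assumes "good K \<mu>"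
  shows "pmf (map_pmf fst \<mu>) x = (\<Sum>k<K. pmf \<mu> (x,k))"
proof -
  have "pmf (map_pmf fst \<mu>) x = (\<Sum>k<K. \<Sum>y\<in>UNIV. pmf \<mu> (y,k) * indicator {x} y)"
    unfolding map_pmf_def using assms by (simp add: pmf_bind_good pmf_return)
  also have "\<dots> = (\<Sum>k<K. pmf \<mu> (x,k))"
    by (intro sum.cong refl) (simp add: indicator_def if_distrib sum.delta cong: if_cong)
  finally show ?thesis .
qed

definition dJ :: "nat \<Rightarrow> ('x::finite \<times> nat \<Rightarrow> real) \<Rightarrow> ('x \<times> nat \<Rightarrow> real) \<Rightarrow> real" where
  "dJ K f g = (\<Sum>k<K. \<Sum>x\<in>UNIV. \<bar>f (x,k) - g (x,k)\<bar>)"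

definition dM :: "nat \<Rightarrow> ('x::finite \<times> nat \<Rightarrow> real) \<Rightarrow> ('x \<times> nat \<Rightarrow> real) \<Rightarrow> real" where
  "dM K f g = (\<Sum>x\<in>UNIV. \<bar>(\<Sum>k<K. f (x,k)) - (\<Sum>k<K. g (x,k))\<bar>)"

lemma dM_le_dJ: "dM K f g \<le> dJ K f g"
proof -
  have "dM K f g = (\<Sum>x\<in>UNIV. \<bar>\<Sum>k<K. f (x,k) - g (x,k)\<bar>)"
    by (simp add: dM_def sum_subtractf)
  also have "\<dots> \<le> (\<Sum>x\<in>UNIV. \<Sum>k<K. \<bar>f (x,k) - g (x,k)\<bar>)"
    by (intro sum_mono sum_abs)
  also have "\<dots> = dJ K f g" unfolding dJ_def by (rule sum.swap)
  finally show ?thesis .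
qed

lemma dJ_nonneg: "0 \<le> dJ K f g" by (simp add: dJ_def sum_nonneg)
lemma dM_nonneg: "0 \<le> dM K f g" by (simp add: dM_def sum_nonneg)

lemma dJ_tri: "dJ K f h \<le> dJ K f g + dJ K g h"
  unfolding dJ_def by (simp add: sum.distrib[symmetric] sum_mono abs_triangle_ineq4 abs_diff_triangle_ineq
      order_trans[OF _ abs_triangle_ineq] del: sum.distrib)

lemma dM_tri: "dM K f h \<le> dM K f g + dM K g h"
  unfolding dM_def by (intro order_trans[OF _ eq_refl[OF sum.distrib]] sum_mono) linarith

lemma l1_marg:
  fixes \<mu> \<mu>' :: "('x::finite \<times> nat) pmf"
  assumes "good K \<mu>" "good K \<mu>'"
  shows "l1 (map_pmf fst \<mu>) (map_pmf fst \<mu>') = dM K (pmf \<mu>) (pmf \<mu>')"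
  using assms by (simp add: l1_def dM_def marg_good)


lemma sum_classes:
  fixes K :: nat
  assumes "finite A" "\<And>a. a \<in> A \<Longrightarrow> snd a < K"
  shows "(\<Sum>k<K. \<Sum>a\<in>{a\<in>A. snd a = k}. G a k) = (\<Sum>a\<in>A. G a (snd a))"
proof -
  have "(\<Sum>k<K. \<Sum>a\<in>{a\<in>A. snd a = k}. G a k) = (\<Sum>k<K. \<Sum>a\<in>A. if snd a = k then G a k else 0)"
    using assms by (simp add: sum.inter_filter)
  also have "\<dots> = (\<Sum>a\<in>A. \<Sum>k<K. if snd a = k then G a k else 0)" by (rule sum.swap)
  also have "\<dots> = (\<Sum>a\<in>A. G a (snd a))"
  proof (intro sum.cong refl)
    fix a assume "a \<in> A"
    then have "snd a \<in> {..<K}" using assms by auto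
    then show "(\<Sum>k<K. if snd a = k then G a k else 0) = G a (snd a)"
      by (subst sum.delta') auto
  qed
  finally show ?thesis .
qed

lemma pmf_nuU:
  fixes \<mu> :: "('x::finite \<times> nat) pmf"
  assumes "good K \<mu>"
  shows "pmf (map_pmf fst (nu_MF d \<mu>)) u = (\<Sum>k<K. \<Sum>x\<in>UNIV. pmf \<mu> (x,k) * pmf (d k x (map_pmf fst \<mu>)) u)"
proof -
  have "map_pmf fst (nu_MF d \<mu>) = bind_pmf \<mu> (\<lambda>z. d (snd z) (fst z) (map_pmf fst \<mu>))"
    unfolding nu_MF_def map_bind_pmf by (simp add: case_prod_unfold map_pmf_comp)
  then show ?thesis using assms by (simp add: pmf_bind_good)
qed

lemma pmf_PMF:
  fixes \<mu> :: "('x::finite \<times> nat) pmf" and d :: "nat \<Rightarrow> 'x \<Rightarrow> 'x pmf \<Rightarrow> 'u::finite pmf"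
  assumes "good K \<mu>" "k < K"
  shows "pmf (P_MF P d \<mu>) (x',k) = (\<Sum>x\<in>UNIV. \<Sum>u\<in>UNIV. pmf \<mu> (x,k) * pmf (d k x (map_pmf fst \<mu>)) u
            * pmf (P k x u (map_pmf fst \<mu>) (map_pmf fst (nu_MF d \<mu>))) x')"
proof -
  have inner: "pmf (bind_pmf (d k0 x (map_pmf fst \<mu>)) (\<lambda>u. map_pmf (\<lambda>x'. (x', k0)) (P k0 x u (map_pmf fst \<mu>) (map_pmf fst (nu_MF d \<mu>))))) (x',k)
      = (if k0 = k then (\<Sum>u\<in>UNIV. pmf (d k x (map_pmf fst \<mu>)) u * pmf (P k x u (map_pmf fst \<mu>) (map_pmf fst (nu_MF d \<mu>))) x') else 0)" for k0 x
  proof -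
    have pm: "pmf (map_pmf (\<lambda>x'. (x', k0)) Q) (x',k) = (if k0 = k then pmf Q x' else 0)" for Q :: "'x pmf"
    proof (cases "k0 = k")
      case True
      then show ?thesis using pmf_map_inj'[of "\<lambda>x'. (x', k0)" Q x'] by (simp add: inj_def)
    next
      case False
      then show ?thesis by (subst pmf_map_outside) auto
    qed
    show ?thesis by (simp add: pmf_bind Efin_UNIV pm)
  qed
  have "pmf (P_MF P d \<mu>) (x',k) = (\<Sum>k0<K. \<Sum>x\<in>UNIV. pmf \<mu> (x,k0) *
       (if k0 = k then (\<Sum>u\<in>UNIV. pmf (d k x (map_pmf fst \<mu>)) u * pmf (P k x u (map_pmf fst \<mu>) (map_pmf fst (nu_MF d \<mu>))) x') else 0))"
    unfolding P_MF_def using assms(1) by (simp add: pmf_bind_good inner)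
  also have "\<dots> = (\<Sum>x\<in>UNIV. pmf \<mu> (x,k) * (\<Sum>u\<in>UNIV. pmf (d k x (map_pmf fst \<mu>)) u * pmf (P k x u (map_pmf fst \<mu>) (map_pmf fst (nu_MF d \<mu>))) x'))"
  proof -
    have "\<And>k0. (\<Sum>x\<in>UNIV. pmf \<mu> (x,k0) * (if k0 = k then (\<Sum>u\<in>UNIV. pmf (d k x (map_pmf fst \<mu>)) u * pmf (P k x u (map_pmf fst \<mu>) (map_pmf fst (nu_MF d \<mu>))) x') else 0))
       = (if k0 = k then (\<Sum>x\<in>UNIV. pmf \<mu> (x,k) * (\<Sum>u\<in>UNIV. pmf (d k x (map_pmf fst \<mu>)) u * pmf (P k x u (map_pmf fst \<mu>) (map_pmf fst (nu_MF d \<mu>))) x')) else 0)"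
      by auto
    then show ?thesis using assms(2) by (simp only: sum.delta finite_lessThan) simp
  qed
  also have "\<dots> = (\<Sum>x\<in>UNIV. \<Sum>u\<in>UNIV. pmf \<mu> (x,k) * pmf (d k x (map_pmf fst \<mu>)) u * pmf (P k x u (map_pmf fst \<mu>) (map_pmf fst (nu_MF d \<mu>))) x')"
    by (simp add: sum_distrib_left mult.assoc)
  finally show ?thesis by simp
qed

lemma good_PMF:
  assumes "good K \<mu>"
  shows "good K (P_MF P d \<mu>)"
  using assms unfolding good_def P_MF_def by (auto simp: case_prod_unfold)

lemma good_mf:
  assumes "good K mu0"
  shows "good K (mf_dist P pol mu0 t)"
  by (induction t) (simp_all add: assms good_PMF)


lemma prod3:
  fixes a b c a' b' c' :: real
  assumes "0 \<le> b" "0 \<le> a'" "0 \<le> b'"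
  shows "\<bar>a*b*c - a'*b'*c'\<bar> \<le> \<bar>a-a'\<bar>*b*\<bar>c\<bar> + a'*\<bar>b-b'\<bar>*\<bar>c\<bar> + a'*b'*\<bar>c-c'\<bar>"
proof -
  have "a*b*c - a'*b'*c' = (a-a')*b*c + a'*(b-b')*c + a'*b'*(c-c')" by algebra
  also have "\<bar>\<dots>\<bar> \<le> \<bar>(a-a')*b*c\<bar> + \<bar>a'*(b-b')*c\<bar> + \<bar>a'*b'*(c-c')\<bar>" by linarith
  also have "\<dots> = \<bar>a-a'\<bar>*b*\<bar>c\<bar> + a'*\<bar>b-b'\<bar>*\<bar>c\<bar> + a'*b'*\<bar>c-c'\<bar>"
    using assms by (simp add: abs_mult)
  finally show ?thesis .
qed

lemma sum_pmf_UNIV: "(\<Sum>u\<in>UNIV. pmf (p :: 'u::finite pmf) u) = 1"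
  by (rule sum_pmf_eq_1) auto

lemma sum_good: "good K \<mu> \<Longrightarrow> (\<Sum>k<K. \<Sum>x\<in>UNIV. pmf \<mu> ((x::'x::finite),k)) = 1"
  using E_good[of K \<mu> "\<lambda>_. 1::real"] by simp

lemma l1_nonneg: "0 \<le> l1 p q" by (simp add: l1_def sum_nonneg)

locale mfsys =
  fixes K :: nat and N :: "nat \<Rightarrow> nat"
    and r :: "nat \<Rightarrow> 'x::finite \<Rightarrow> 'u::finite \<Rightarrow> 'x pmf \<Rightarrow> 'u pmf \<Rightarrow> real"
    and P :: "nat \<Rightarrow> 'x \<Rightarrow> 'u \<Rightarrow> 'x pmf \<Rightarrow> 'u pmf \<Rightarrow> 'x pmf"
    and pol :: "nat \<Rightarrow> nat \<Rightarrow> 'x \<Rightarrow> 'x pmf \<Rightarrow> 'u pmf"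
    and M_R L_R L_P L_Q :: real
  assumes K_pos: "K \<ge> 1"
    and N_pos: "\<And>k. k < K \<Longrightarrow> N k \<ge> 1"
    and MR0: "M_R \<ge> 0" and LR0: "L_R \<ge> 0" and LP0: "L_P \<ge> 0" and LQ0: "L_Q \<ge> 0"
    and r_bound: "\<And>k x u m n. k < K \<Longrightarrow> \<bar>r k x u m n\<bar> \<le> M_R"
    and r_lip: "\<And>k x u m1 n1 m2 n2. k < K \<Longrightarrow>
        \<bar>r k x u m1 n1 - r k x u m2 n2\<bar> \<le> L_R * (l1 m1 m2 + l1 n1 n2)"
    and P_lip: "\<And>k x u m1 n1 m2 n2. k < K \<Longrightarrow>
        l1 (P k x u m1 n1) (P k x u m2 n2) \<le> L_P * (l1 m1 m2 + l1 n1 n2)"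
    and pol_lip: "\<And>t k x m1 m2. k < K \<Longrightarrow>
        l1 (pol t k x m1) (pol t k x m2) \<le> L_Q * l1 m1 m2"
begin

definition RMF :: "nat \<Rightarrow> ('x \<times> nat) pmf \<Rightarrow> real" where
  "RMF t \<mu> = (\<Sum>k<K. r_MF r (pol t) \<mu> k)"

lemma lip_nu:
  assumes g: "good K \<mu>" "good K \<mu>'"
  shows "l1 (map_pmf fst (nu_MF (pol t) \<mu>)) (map_pmf fst (nu_MF (pol t) \<mu>'))
         \<le> dJ K (pmf \<mu>) (pmf \<mu>') + L_Q * dM K (pmf \<mu>) (pmf \<mu>')"
proof -
  let ?m = "map_pmf fst \<mu>" and ?m' = "map_pmf fst \<mu>'"
  let ?D = "dM K (pmf \<mu>) (pmf \<mu>')"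
  have "l1 (map_pmf fst (nu_MF (pol t) \<mu>)) (map_pmf fst (nu_MF (pol t) \<mu>'))
     = (\<Sum>u\<in>UNIV. \<bar>\<Sum>k<K. \<Sum>x\<in>UNIV. pmf \<mu> (x,k) * pmf (pol t k x ?m) u - pmf \<mu>' (x,k) * pmf (pol t k x ?m') u\<bar>)"
    using g by (simp add: l1_def pmf_nuU sum_subtractf)
  also have "\<dots> \<le> (\<Sum>u\<in>UNIV. \<Sum>k<K. \<Sum>x\<in>UNIV. \<bar>pmf \<mu> (x,k) * pmf (pol t k x ?m) u - pmf \<mu>' (x,k) * pmf (pol t k x ?m') u\<bar>)"
    by (intro sum_mono order_trans[OF sum_abs]) auto
  also have "\<dots> = (\<Sum>k<K. \<Sum>x\<in>UNIV. \<Sum>u\<in>UNIV. \<bar>pmf \<mu> (x,k) * pmf (pol t k x ?m) u - pmf \<mu>' (x,k) * pmf (pol t k x ?m') u\<bar>)"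
    by (subst sum.swap, rule sum.cong[OF refl], rule sum.swap)
  also have "\<dots> \<le> (\<Sum>k<K. \<Sum>x\<in>UNIV. \<bar>pmf \<mu> (x,k) - pmf \<mu>' (x,k)\<bar> + pmf \<mu>' (x,k) * (L_Q * ?D))"
  proof (intro sum_mono)
    fix k x assume k: "k \<in> {..<K}"
    have "(\<Sum>u\<in>UNIV. \<bar>pmf \<mu> (x,k) * pmf (pol t k x ?m) u - pmf \<mu>' (x,k) * pmf (pol t k x ?m') u\<bar>)
       \<le> (\<Sum>u\<in>UNIV. \<bar>pmf \<mu> (x,k) - pmf \<mu>' (x,k)\<bar> * pmf (pol t k x ?m) u * 1 + pmf \<mu>' (x,k) * \<bar>pmf (pol t k x ?m) u - pmf (pol t k x ?m') u\<bar> * 1 + pmf \<mu>' (x,k) * pmf (pol t k x ?m') u * 0)"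
      using prod3[of "pmf (pol t k x ?m) u" "pmf \<mu>' (x,k)" "pmf (pol t k x ?m') u" "pmf \<mu> (x,k)" 1 1 for u]
      by (intro sum_mono) simp
    also have "\<dots> = \<bar>pmf \<mu> (x,k) - pmf \<mu>' (x,k)\<bar> + pmf \<mu>' (x,k) * l1 (pol t k x ?m) (pol t k x ?m')"
      by (simp add: sum.distrib sum_distrib_left[symmetric] sum_pmf_UNIV l1_def)
    also have "\<dots> \<le> \<bar>pmf \<mu> (x,k) - pmf \<mu>' (x,k)\<bar> + pmf \<mu>' (x,k) * (L_Q * ?D)"
      using pol_lip[of k t x ?m ?m'] k l1_marg[OF g] by (intro add_left_mono mult_left_mono) auto
    finally show "(\<Sum>u\<in>UNIV. \<bar>pmf \<mu> (x,k) * pmf (pol t k x ?m) u - pmf \<mu>' (x,k) * pmf (pol t k x ?m') u\<bar>)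
       \<le> \<bar>pmf \<mu> (x,k) - pmf \<mu>' (x,k)\<bar> + pmf \<mu>' (x,k) * (L_Q * ?D)" .
  qed
  also have "\<dots> = dJ K (pmf \<mu>) (pmf \<mu>') + L_Q * ?D"
    using sum_good[OF g(2)]
    by (simp add: dJ_def sum.distrib sum_distrib_right[symmetric])
  finally show ?thesis .
qed

lemma lip_P:
  assumes g: "good K \<mu>" "good K \<mu>'"
  shows "dJ K (pmf (P_MF P (pol t) \<mu>)) (pmf (P_MF P (pol t) \<mu>'))
         \<le> (1 + L_P) * dJ K (pmf \<mu>) (pmf \<mu>') + (L_Q + L_P * (1 + L_Q)) * dM K (pmf \<mu>) (pmf \<mu>')"
proof -
  let ?m = "map_pmf fst \<mu>" and ?m' = "map_pmf fst \<mu>'"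
  let ?n = "map_pmf fst (nu_MF (pol t) \<mu>)" and ?n' = "map_pmf fst (nu_MF (pol t) \<mu>')"
  let ?D = "dM K (pmf \<mu>) (pmf \<mu>')" and ?J = "dJ K (pmf \<mu>) (pmf \<mu>')"
  let ?W = "?D + l1 ?n ?n'"
  define F where "F k x u x' = pmf \<mu> (x,k) * pmf (pol t k x ?m) u * pmf (P k x u ?m ?n) x'" for k x u x'
  define F' where "F' k x u x' = pmf \<mu>' (x,k) * pmf (pol t k x ?m') u * pmf (P k x u ?m' ?n') x'" for k x u x'
  have "dJ K (pmf (P_MF P (pol t) \<mu>)) (pmf (P_MF P (pol t) \<mu>'))
     = (\<Sum>k<K. \<Sum>x'\<in>UNIV. \<bar>\<Sum>x\<in>UNIV. \<Sum>u\<in>UNIV. F k x u x' - F' k x u x'\<bar>)"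
    unfolding dJ_def using g by (intro sum.cong refl) (simp add: pmf_PMF F_def F'_def sum_subtractf)
  also have "\<dots> \<le> (\<Sum>k<K. \<Sum>x'\<in>UNIV. \<Sum>x\<in>UNIV. \<Sum>u\<in>UNIV. \<bar>F k x u x' - F' k x u x'\<bar>)"
    by (intro sum_mono order_trans[OF sum_abs]) auto
  also have "\<dots> = (\<Sum>k<K. \<Sum>x\<in>UNIV. \<Sum>u\<in>UNIV. \<Sum>x'\<in>UNIV. \<bar>F k x u x' - F' k x u x'\<bar>)"
  proof (rule sum.cong[OF refl])
    fix k
    show "(\<Sum>x'\<in>UNIV. \<Sum>x\<in>UNIV. \<Sum>u\<in>UNIV. \<bar>F k x u x' - F' k x u x'\<bar>) = (\<Sum>x\<in>UNIV. \<Sum>u\<in>UNIV. \<Sum>x'\<in>UNIV. \<bar>F k x u x' - F' k x u x'\<bar>)"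
      by (subst sum.swap, rule sum.cong[OF refl], rule sum.swap)
  qed
  also have "\<dots> \<le> (\<Sum>k<K. \<Sum>x\<in>UNIV. \<bar>pmf \<mu> (x,k) - pmf \<mu>' (x,k)\<bar> + pmf \<mu>' (x,k) * (L_Q * ?D + L_P * ?W))"
  proof (intro sum_mono)
    fix k x assume k: "k \<in> {..<K}"
    have "(\<Sum>u\<in>UNIV. \<Sum>x'\<in>UNIV. \<bar>F k x u x' - F' k x u x'\<bar>)
       \<le> (\<Sum>u\<in>UNIV. \<Sum>x'\<in>UNIV. \<bar>pmf \<mu> (x,k) - pmf \<mu>' (x,k)\<bar> * pmf (pol t k x ?m) u * pmf (P k x u ?m ?n) x'
            + pmf \<mu>' (x,k) * \<bar>pmf (pol t k x ?m) u - pmf (pol t k x ?m') u\<bar> * pmf (P k x u ?m ?n) x'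
            + pmf \<mu>' (x,k) * pmf (pol t k x ?m') u * \<bar>pmf (P k x u ?m ?n) x' - pmf (P k x u ?m' ?n') x'\<bar>)"
      unfolding F_def F'_def
      by (intro sum_mono order_trans[OF prod3]) auto
    also have "\<dots> = (\<Sum>u\<in>UNIV. \<bar>pmf \<mu> (x,k) - pmf \<mu>' (x,k)\<bar> * pmf (pol t k x ?m) u
            + pmf \<mu>' (x,k) * \<bar>pmf (pol t k x ?m) u - pmf (pol t k x ?m') u\<bar>
            + pmf \<mu>' (x,k) * pmf (pol t k x ?m') u * l1 (P k x u ?m ?n) (P k x u ?m' ?n'))"
      by (simp add: sum.distrib sum_distrib_left[symmetric] sum_pmf_UNIV l1_def)
    also have "\<dots> \<le> (\<Sum>u\<in>UNIV. \<bar>pmf \<mu> (x,k) - pmf \<mu>' (x,k)\<bar> * pmf (pol t k x ?m) u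
            + pmf \<mu>' (x,k) * \<bar>pmf (pol t k x ?m) u - pmf (pol t k x ?m') u\<bar>
            + pmf \<mu>' (x,k) * pmf (pol t k x ?m') u * (L_P * ?W))"
      using P_lip[of k x _ ?m ?n ?m' ?n'] k l1_marg[OF g]
      by (intro sum_mono add_left_mono mult_left_mono) auto
    also have "\<dots> = \<bar>pmf \<mu> (x,k) - pmf \<mu>' (x,k)\<bar> + pmf \<mu>' (x,k) * l1 (pol t k x ?m) (pol t k x ?m')
          + pmf \<mu>' (x,k) * (L_P * ?W)"
      by (simp add: sum.distrib sum_distrib_left[symmetric] sum_distrib_right[symmetric] sum_pmf_UNIV l1_def)
    also have "\<dots> \<le> \<bar>pmf \<mu> (x,k) - pmf \<mu>' (x,k)\<bar> + pmf \<mu>' (x,k) * (L_Q * ?D) + pmf \<mu>' (x,k) * (L_P * ?W)"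
      using pol_lip[of k t x ?m ?m'] k l1_marg[OF g] by (intro add_left_mono add_right_mono mult_left_mono) auto
    finally show "(\<Sum>u\<in>UNIV. \<Sum>x'\<in>UNIV. \<bar>F k x u x' - F' k x u x'\<bar>)
       \<le> \<bar>pmf \<mu> (x,k) - pmf \<mu>' (x,k)\<bar> + pmf \<mu>' (x,k) * (L_Q * ?D + L_P * ?W)"
      by (simp add: distrib_left)
  qed
  also have "\<dots> = ?J + (L_Q * ?D + L_P * ?W)"
    using sum_good[OF g(2)]
    by (simp add: dJ_def sum.distrib sum_distrib_right[symmetric])
  also have "\<dots> \<le> ?J + (L_Q * ?D + L_P * (?D + (?J + L_Q * ?D)))"
    using lip_nu[OF g, of t] LP0 by (intro add_left_mono mult_left_mono) auto
  also have "\<dots> = (1 + L_P) * ?J + (L_Q + L_P * (1 + L_Q)) * ?D"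
    by (simp add: algebra_simps)
  finally show ?thesis .
qed

lemma lip_R:
  assumes g: "good K \<mu>" "good K \<mu>'"
  shows "\<bar>RMF t \<mu> - RMF t \<mu>'\<bar>
         \<le> (M_R + L_R) * dJ K (pmf \<mu>) (pmf \<mu>') + (M_R * L_Q + L_R * (1 + L_Q)) * dM K (pmf \<mu>) (pmf \<mu>')"
proof -
  let ?m = "map_pmf fst \<mu>" and ?m' = "map_pmf fst \<mu>'"
  let ?n = "map_pmf fst (nu_MF (pol t) \<mu>)" and ?n' = "map_pmf fst (nu_MF (pol t) \<mu>')"
  let ?D = "dM K (pmf \<mu>) (pmf \<mu>')" and ?J = "dJ K (pmf \<mu>) (pmf \<mu>')"
  let ?W = "?D + l1 ?n ?n'"
  define F where "F k x u = pmf \<mu> (x,k) * pmf (pol t k x ?m) u * r k x u ?m ?n" for k x u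
  define F' where "F' k x u = pmf \<mu>' (x,k) * pmf (pol t k x ?m') u * r k x u ?m' ?n'" for k x u
  have "\<bar>RMF t \<mu> - RMF t \<mu>'\<bar> = \<bar>\<Sum>k<K. \<Sum>x\<in>UNIV. \<Sum>u\<in>UNIV. F k x u - F' k x u\<bar>"
    by (simp add: RMF_def r_MF_def F_def F'_def sum_subtractf)
  also have "\<dots> \<le> (\<Sum>k<K. \<Sum>x\<in>UNIV. \<Sum>u\<in>UNIV. \<bar>F k x u - F' k x u\<bar>)"
    by (intro order_trans[OF sum_abs] sum_mono order_trans[OF sum_abs]) auto
  also have "\<dots> \<le> (\<Sum>k<K. \<Sum>x\<in>UNIV. \<bar>pmf \<mu> (x,k) - pmf \<mu>' (x,k)\<bar> * M_R + pmf \<mu>' (x,k) * (M_R * (L_Q * ?D) + L_R * ?W))"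
  proof (intro sum_mono)
    fix k x assume k: "k \<in> {..<K}"
    have "(\<Sum>u\<in>UNIV. \<bar>F k x u - F' k x u\<bar>)
       \<le> (\<Sum>u\<in>UNIV. \<bar>pmf \<mu> (x,k) - pmf \<mu>' (x,k)\<bar> * pmf (pol t k x ?m) u * \<bar>r k x u ?m ?n\<bar>
            + pmf \<mu>' (x,k) * \<bar>pmf (pol t k x ?m) u - pmf (pol t k x ?m') u\<bar> * \<bar>r k x u ?m ?n\<bar>
            + pmf \<mu>' (x,k) * pmf (pol t k x ?m') u * \<bar>r k x u ?m ?n - r k x u ?m' ?n'\<bar>)"
      unfolding F_def F'_def
      by (intro sum_mono order_trans[OF prod3]) auto
    also have "\<dots> \<le> (\<Sum>u\<in>UNIV. \<bar>pmf \<mu> (x,k) - pmf \<mu>' (x,k)\<bar> * pmf (pol t k x ?m) u * M_R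
            + pmf \<mu>' (x,k) * \<bar>pmf (pol t k x ?m) u - pmf (pol t k x ?m') u\<bar> * M_R
            + pmf \<mu>' (x,k) * pmf (pol t k x ?m') u * (L_R * ?W))"
      using r_lip[of k x _ ?m ?n ?m' ?n'] r_bound[of k x _ ?m ?n] k l1_marg[OF g]
      by (intro sum_mono add_mono mult_left_mono) auto
    also have "\<dots> = \<bar>pmf \<mu> (x,k) - pmf \<mu>' (x,k)\<bar> * M_R + pmf \<mu>' (x,k) * l1 (pol t k x ?m) (pol t k x ?m') * M_R
          + pmf \<mu>' (x,k) * (L_R * ?W)"
      by (simp add: sum.distrib sum_distrib_left[symmetric] sum_distrib_right[symmetric] sum_pmf_UNIV l1_def)
    also have "\<dots> \<le> \<bar>pmf \<mu> (x,k) - pmf \<mu>' (x,k)\<bar> * M_R + pmf \<mu>' (x,k) * (L_Q * ?D) * M_R + pmf \<mu>' (x,k) * (L_R * ?W)"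
      using pol_lip[of k t x ?m ?m'] k l1_marg[OF g] MR0 by (intro add_left_mono add_right_mono mult_left_mono mult_right_mono) auto
    finally show "(\<Sum>u\<in>UNIV. \<bar>F k x u - F' k x u\<bar>)
       \<le> \<bar>pmf \<mu> (x,k) - pmf \<mu>' (x,k)\<bar> * M_R + pmf \<mu>' (x,k) * (M_R * (L_Q * ?D) + L_R * ?W)"
      by (simp add: algebra_simps)
  qed
  also have "\<dots> = ?J * M_R + (M_R * (L_Q * ?D) + L_R * ?W)"
    using sum_good[OF g(2)]
    by (simp add: dJ_def sum.distrib sum_distrib_right[symmetric])
  also have "\<dots> \<le> ?J * M_R + (M_R * (L_Q * ?D) + L_R * (?D + (?J + L_Q * ?D)))"
    using lip_nu[OF g, of t] LR0 by (intro add_left_mono mult_left_mono) auto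
  also have "\<dots> = (M_R + L_R) * ?J + (M_R * L_Q + L_R * (1 + L_Q)) * ?D"
    by (simp add: algebra_simps)
  finally show ?thesis .
qed

end

lemma E_bind:
  fixes h :: "'b \<Rightarrow> real"
  assumes "finite (set_pmf p)" "\<And>x. x \<in> set_pmf p \<Longrightarrow> finite (set_pmf (f x))"
  shows "measure_pmf.expectation (bind_pmf p f) h = measure_pmf.expectation p (\<lambda>x. measure_pmf.expectation (f x) h)"
  using assms by (subst pmf_expectation_bind[of "set_pmf p"]) (simp_all add: Efin[OF assms(1)])

lemma emp_conc:
  fixes \<pi> :: "'a \<Rightarrow> 'u::finite pmf"
  assumes A: "finite A" "A \<noteq> {}"
    and nu: "\<And>u. pmf \<nu> u = (\<Sum>a\<in>A. pmf (\<pi> a) u) / real (card A)"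
  shows "measure_pmf.expectation (Pi_pmf A d \<pi>) (\<lambda>us. l1 (emp A us) \<nu>) \<le> sqrt (real CARD('u)) / sqrt (real (card A))"
proof -
  have cA: "real (card A) > 0" using A by (simp add: card_gt_0_iff)
  have "(\<lambda>us. l1 (emp A us) \<nu>) = (\<lambda>us. (\<Sum>u\<in>UNIV. \<bar>\<Sum>a\<in>A. ((if us a = u then 1 else 0) - measure_pmf.expectation (\<pi> a) (\<lambda>y. if y = u then 1 else 0))\<bar>) / real (card A))"
    using A cA by (auto simp: l1_def emp_pmf nu E_ind sum_subtractf sum_divide_distrib[symmetric] diff_divide_distrib[symmetric] fun_eq_iff)
  then have "measure_pmf.expectation (Pi_pmf A d \<pi>) (\<lambda>us. l1 (emp A us) \<nu>)
      = measure_pmf.expectation (Pi_pmf A d \<pi>) (\<lambda>us. \<Sum>u\<in>UNIV. \<bar>\<Sum>a\<in>A. ((if us a = u then 1 else 0) - measure_pmf.expectation (\<pi> a) (\<lambda>y. if y = u then 1 else 0))\<bar>) / real (card A)"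
    by simp
  also have "\<dots> \<le> sqrt (real CARD('u) * real (card A)) / real (card A)"
    using cA by (intro divide_right_mono conc_L1[OF A(1) order_refl]) auto
  also have "\<dots> = sqrt (real CARD('u)) / sqrt (real (card A))"
    using cA by (simp add: real_sqrt_mult field_simps)
  finally show ?thesis .
qed

lemma l1_self[simp]: "l1 p p = 0" by (simp add: l1_def)

lemma div_le_aux: "0 < (n::real) \<Longrightarrow> \<bar>s\<bar> \<le> n * c \<Longrightarrow> \<bar>s / n\<bar> \<le> c"
  by (simp add: abs_divide pos_divide_le_eq mult.commute)

context mfsys
begin

abbreviation "A \<equiv> agents K N"
definition "NN = real (card A)"
definition "Ak k = {a\<in>A. snd a = k}"

lemma A_eq: "A = (\<Union>k\<in>{..<K}. (\<lambda>j. (j,k)) ` {..<N k})"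
  by (auto simp: agents_def)

lemma finA: "finite A" by (simp add: A_eq)

lemma snd_lt: "a \<in> A \<Longrightarrow> snd a < K" by (auto simp: agents_def)

lemma A_ne: "A \<noteq> {}"
proof -
  have "(0,0) \<in> A" using K_pos N_pos[of 0] by (auto simp: agents_def)
  then show ?thesis by auto
qed

lemma Ak_eq: "k < K \<Longrightarrow> Ak k = (\<lambda>j. (j,k)) ` {..<N k}"
  by (auto simp: Ak_def agents_def)

lemma card_Ak: "k < K \<Longrightarrow> card (Ak k) = N k"
  by (simp add: Ak_eq card_image inj_on_def)

lemma Ak_sub: "Ak k \<subseteq> A" by (auto simp: Ak_def)

lemma cardA: "card A = Npop K N"
proof -
  have "card A = (\<Sum>k<K. card ((\<lambda>j. (j,k)) ` {..<N k}))"
    unfolding A_eq by (intro card_UN_disjoint) auto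
  also have "\<dots> = (\<Sum>k<K. N k)" by (simp add: card_image inj_on_def)
  finally show ?thesis by (simp add: Npop_def)
qed

lemma NN_pos: "NN > 0" using finA A_ne by (simp add: NN_def card_gt_0_iff)

lemma NN_ge1: "NN \<ge> 1"
proof -
  have "card A \<ge> 1" using finA A_ne by (simp add: Suc_le_eq card_gt_0_iff)
  then show ?thesis by (simp add: NN_def)
qed

definition empJ :: "(nat \<times> nat \<Rightarrow> 'x) \<Rightarrow> ('x \<times> nat) pmf" where
  "empJ xs = emp A (\<lambda>a. (xs a, snd a))"

lemma good_empJ: "good K (empJ xs)"
  using finA A_ne snd_lt by (auto simp: good_def empJ_def emp_def)

lemma marg_empJ: "map_pmf fst (empJ xs) = emp A xs"
  by (simp add: empJ_def emp_def map_pmf_comp)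

lemma pmf_empJ: "pmf (empJ xs) (x,k) = (\<Sum>a\<in>Ak k. if xs a = x then 1 else 0) / NN"
proof -
  have "pmf (empJ xs) (x,k) = (\<Sum>a\<in>A. if (xs a, snd a) = (x,k) then 1 else 0) / NN"
    using finA A_ne by (simp add: empJ_def emp_pmf NN_def)
  also have "(\<Sum>a\<in>A. if (xs a, snd a) = (x,k) then 1 else (0::real)) = (\<Sum>a\<in>A. if snd a = k then (if xs a = x then 1 else 0) else 0)"
    by (intro sum.cong) auto
  also have "\<dots> = (\<Sum>a\<in>Ak k. if xs a = x then 1 else 0)"
    using finA by (simp add: Ak_def sum.inter_filter)
  finally show ?thesis .
qed

lemma sum_class_empJ: "(\<Sum>x\<in>UNIV. pmf (empJ xs) (x,k) * F x) = (\<Sum>a\<in>Ak k. F (xs a)) / NN"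
proof -
  have e: "pmf (empJ xs) (x,k) * F x = (\<Sum>a\<in>Ak k. (if xs a = x then F x else 0)) / NN" for x
  proof -
    have "pmf (empJ xs) (x,k) * F x = (\<Sum>a\<in>Ak k. (if xs a = x then 1 else 0) * F x) / NN"
      by (simp add: pmf_empJ sum_distrib_right)
    also have "(\<Sum>a\<in>Ak k. (if xs a = x then 1 else 0) * F x) = (\<Sum>a\<in>Ak k. (if xs a = x then F x else 0))"
      by (intro sum.cong) auto
    finally show ?thesis .
  qed
  have "(\<Sum>x\<in>UNIV. pmf (empJ xs) (x,k) * F x) = (\<Sum>x\<in>UNIV. \<Sum>a\<in>Ak k. (if xs a = x then F x else 0)) / NN"
    by (simp add: e sum_divide_distrib)
  also have "(\<Sum>x\<in>UNIV. \<Sum>a\<in>Ak k. (if xs a = x then F x else 0)) = (\<Sum>a\<in>Ak k. F (xs a))"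
    by (subst sum.swap) (simp add: sum.delta)
  finally show ?thesis .
qed

lemma sum_Ak: "(\<Sum>k<K. \<Sum>a\<in>Ak k. G a k) = (\<Sum>a\<in>A. G a (snd a))"
  unfolding Ak_def using finA snd_lt by (rule sum_classes)

lemma sum_empJ: "(\<Sum>k<K. \<Sum>x\<in>UNIV. pmf (empJ xs) (x,k) * F x k) = (\<Sum>a\<in>A. F (xs a) (snd a)) / NN"
  by (simp add: sum_class_empJ sum_divide_distrib[symmetric] sum_Ak)

lemma fin_act: "finite (set_pmf (act_dist K N pol t xs))"
  unfolding act_dist_def using finA by (intro fin_Pi) auto

lemma fin_next: "finite (set_pmf (next_dist K N P xs us))"
  unfolding next_dist_def using finA by (intro fin_Pi) auto

lemma fin_state: "finite (set_pmf (state_dist K N P pol x0 t))"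
  by (induction t) (simp_all add: fin_act fin_next)

lemma pmf_nubar:
  "pmf (map_pmf fst (nu_MF (pol t) (empJ xs))) u = (\<Sum>a\<in>A. pmf (pol t (snd a) (xs a) (emp A xs)) u) / NN"
  by (simp add: pmf_nuU[OF good_empJ] marg_empJ sum_empJ)

lemma rew_step:
  "\<bar>measure_pmf.expectation (act_dist K N pol t xs)
      (\<lambda>us. (\<Sum>a\<in>A. r (snd a) (xs a) (us a) (emp A xs) (emp A us)) / NN) - RMF t (empJ xs)\<bar>
   \<le> L_R * (sqrt (real CARD('u)) / sqrt NN)"
proof -
  let ?p = "act_dist K N pol t xs"
  let ?nb = "map_pmf fst (nu_MF (pol t) (empJ xs))"
  let ?\<pi> = "\<lambda>a. pol t (snd a) (xs a) (emp A xs)"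
  have RM: "RMF t (empJ xs) = measure_pmf.expectation ?p (\<lambda>us. (\<Sum>a\<in>A. r (snd a) (xs a) (us a) (emp A xs) ?nb) / NN)"
  proof -
    have "RMF t (empJ xs) = (\<Sum>a\<in>A. \<Sum>u\<in>UNIV. pmf (?\<pi> a) u * r (snd a) (xs a) u (emp A xs) ?nb) / NN"
      unfolding RMF_def r_MF_def marg_empJ
      by (simp add: mult.assoc sum_distrib_left[symmetric] sum_empJ)
    also have "\<dots> = (\<Sum>a\<in>A. measure_pmf.expectation ?p (\<lambda>us. r (snd a) (xs a) (us a) (emp A xs) ?nb)) / NN"
    proof (intro arg_cong2[where f="(/)"] sum.cong refl)
      fix a assume "a \<in> A"
      then show "(\<Sum>u\<in>UNIV. pmf (?\<pi> a) u * r (snd a) (xs a) u (emp A xs) ?nb) = measure_pmf.expectation ?p (\<lambda>us. r (snd a) (xs a) (us a) (emp A xs) ?nb)"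
        unfolding act_dist_def using E_Pi_comp[OF finA, of a undefined ?\<pi> "\<lambda>u. r (snd a) (xs a) u (emp A xs) ?nb"]
        by (simp add: Efin_UNIV)
    qed
    also have "\<dots> = measure_pmf.expectation ?p (\<lambda>us. (\<Sum>a\<in>A. r (snd a) (xs a) (us a) (emp A xs) ?nb) / NN)"
      using fin_act by (simp add: integrable_measure_pmf_finite)
    finally show ?thesis .
  qed
  have "\<bar>measure_pmf.expectation ?p (\<lambda>us. (\<Sum>a\<in>A. r (snd a) (xs a) (us a) (emp A xs) (emp A us)) / NN) - RMF t (empJ xs)\<bar>
     = \<bar>measure_pmf.expectation ?p (\<lambda>us. (\<Sum>a\<in>A. r (snd a) (xs a) (us a) (emp A xs) (emp A us) - r (snd a) (xs a) (us a) (emp A xs) ?nb) / NN)\<bar>"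
    unfolding RM using fin_act
    by (simp add: integrable_measure_pmf_finite sum_subtractf diff_divide_distrib)
  also have "\<dots> \<le> measure_pmf.expectation ?p (\<lambda>us. \<bar>(\<Sum>a\<in>A. r (snd a) (xs a) (us a) (emp A xs) (emp A us) - r (snd a) (xs a) (us a) (emp A xs) ?nb) / NN\<bar>)"
    by (rule integral_abs_bound)
  also have "\<dots> \<le> measure_pmf.expectation ?p (\<lambda>us. L_R * l1 (emp A us) ?nb)"
  proof (rule integral_mono)
    show "integrable (measure_pmf ?p) (\<lambda>us. \<bar>(\<Sum>a\<in>A. r (snd a) (xs a) (us a) (emp A xs) (emp A us) - r (snd a) (xs a) (us a) (emp A xs) ?nb) / NN\<bar>)"
      using fin_act by (simp add: integrable_measure_pmf_finite)
    show "integrable (measure_pmf ?p) (\<lambda>us. L_R * l1 (emp A us) ?nb)"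
      using fin_act by (simp add: integrable_measure_pmf_finite)
    fix us
    have "\<bar>\<Sum>a\<in>A. r (snd a) (xs a) (us a) (emp A xs) (emp A us) - r (snd a) (xs a) (us a) (emp A xs) ?nb\<bar>
        \<le> (\<Sum>a\<in>A. L_R * l1 (emp A us) ?nb)"
    proof (intro order_trans[OF sum_abs] sum_mono)
      fix a assume "a \<in> A"
      then show "\<bar>r (snd a) (xs a) (us a) (emp A xs) (emp A us) - r (snd a) (xs a) (us a) (emp A xs) ?nb\<bar> \<le> L_R * l1 (emp A us) ?nb"
        using r_lip[of "snd a" "xs a" "us a" "emp A xs" "emp A us" "emp A xs" ?nb] snd_lt
        by (simp add: l1_self)
    qed
    also have "\<dots> = NN * (L_R * l1 (emp A us) ?nb)" by (simp add: NN_def)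
    finally show "\<bar>(\<Sum>a\<in>A. r (snd a) (xs a) (us a) (emp A xs) (emp A us) - r (snd a) (xs a) (us a) (emp A xs) ?nb) / NN\<bar>
        \<le> L_R * l1 (emp A us) ?nb"
      by (rule div_le_aux[OF NN_pos])
  qed
  also have "\<dots> = L_R * measure_pmf.expectation ?p (\<lambda>us. l1 (emp A us) ?nb)" by simp
  also have "\<dots> \<le> L_R * (sqrt (real CARD('u)) / sqrt NN)"
    unfolding act_dist_def NN_def using LR0
    by (intro mult_left_mono emp_conc finA A_ne) (simp_all add: pmf_nubar NN_def)
  finally show ?thesis .
qed

end

lemma tri3: "\<bar>(a::real) - d\<bar> \<le> \<bar>a - b\<bar> + \<bar>b - c\<bar> + \<bar>c - d\<bar>" by linarith

context mfsys
begin

definition "polA t xs = (\<lambda>a. pol t (snd a) (xs a) (emp A xs))"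
definition "nb t xs = map_pmf fst (nu_MF (pol t) (empJ xs))"
definition "Qa xs us = (\<lambda>a. P (snd a) (xs a) (us a) (emp A xs) (emp A us))"
definition "Qb t xs a u = P (snd a) (xs a) u (emp A xs) (nb t xs)"
definition "TT t xs B x' = (\<Sum>a\<in>B. \<Sum>u\<in>UNIV. pmf (polA t xs a) u * pmf (Qb t xs a u) x')"
definition "step t xs = bind_pmf (act_dist K N pol t xs) (\<lambda>us. next_dist K N P xs us)"

lemma act_eq: "act_dist K N pol t xs = Pi_pmf A undefined (polA t xs)"
  by (simp add: act_dist_def polA_def)

lemma next_eq: "next_dist K N P xs us = Pi_pmf A undefined (Qa xs us)"
  by (simp add: next_dist_def Qa_def)

lemma fin_step: "finite (set_pmf (step t xs))"
  by (simp add: step_def fin_act fin_next)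

lemma state_B:
  assumes B: "B \<subseteq> A"
  shows "measure_pmf.expectation (step t xs)
           (\<lambda>xs'. \<Sum>x'\<in>UNIV. \<bar>(\<Sum>a\<in>B. if xs' a = x' then 1 else 0) - TT t xs B x'\<bar>)
         \<le> 2 * sqrt (real CARD('x) * real (card B)) + real (card B) * L_P * (sqrt (real CARD('u)) / sqrt NN)"
proof -
  have finB: "finite B" using B finA by (rule finite_subset)
  define F1 where "F1 us xs' = (\<Sum>x'\<in>UNIV. \<bar>\<Sum>a\<in>B. ((if xs' a = x' then 1 else 0::real) - measure_pmf.expectation (Qa xs us a) (\<lambda>y. if y = x' then 1 else 0))\<bar>)" for us xs'
  define F2 where "F2 us = (\<Sum>x'\<in>UNIV. \<bar>(\<Sum>a\<in>B. pmf (Qa xs us a) x') - (\<Sum>a\<in>B. pmf (Qb t xs a (us a)) x')\<bar>)" for us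
  define G where "G us = (\<Sum>x'\<in>UNIV. \<bar>\<Sum>a\<in>B. (pmf (Qb t xs a (us a)) x' - measure_pmf.expectation (polA t xs a) (\<lambda>u. pmf (Qb t xs a u) x'))\<bar>)" for us
  have TT': "TT t xs B x' = (\<Sum>a\<in>B. measure_pmf.expectation (polA t xs a) (\<lambda>u. pmf (Qb t xs a u) x'))" for x'
    by (simp add: TT_def Efin_UNIV)
  have pw: "(\<Sum>x'\<in>UNIV. \<bar>(\<Sum>a\<in>B. if xs' a = x' then 1 else 0) - TT t xs B x'\<bar>) \<le> F1 us xs' + F2 us + G us" for us xs'
  proof -
    have "(\<Sum>x'\<in>UNIV. \<bar>(\<Sum>a\<in>B. if xs' a = x' then 1 else 0) - TT t xs B x'\<bar>)
       \<le> (\<Sum>x'\<in>UNIV. \<bar>(\<Sum>a\<in>B. if xs' a = x' then 1 else 0) - (\<Sum>a\<in>B. pmf (Qa xs us a) x')\<bar>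
            + \<bar>(\<Sum>a\<in>B. pmf (Qa xs us a) x') - (\<Sum>a\<in>B. pmf (Qb t xs a (us a)) x')\<bar>
            + \<bar>(\<Sum>a\<in>B. pmf (Qb t xs a (us a)) x') - TT t xs B x'\<bar>)"
      by (intro sum_mono tri3)
    also have "\<dots> = F1 us xs' + F2 us + G us"
      by (simp add: F1_def F2_def G_def TT' E_ind sum.distrib sum_subtractf)
    finally show ?thesis .
  qed
  have F1b: "measure_pmf.expectation (next_dist K N P xs us) (F1 us) \<le> sqrt (real CARD('x) * real (card B))" for us
    unfolding next_eq F1_def using finA B by (intro conc_L1) auto
  have F2b: "F2 us \<le> real (card B) * L_P * l1 (emp A us) (nb t xs)" for us
  proof -
    have "F2 us \<le> (\<Sum>x'\<in>UNIV. \<Sum>a\<in>B. \<bar>pmf (Qa xs us a) x' - pmf (Qb t xs a (us a)) x'\<bar>)"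
      unfolding F2_def by (intro sum_mono) (simp add: sum_subtractf[symmetric] sum_abs)
    also have "\<dots> = (\<Sum>a\<in>B. l1 (Qa xs us a) (Qb t xs a (us a)))"
      unfolding l1_def by (rule sum.swap)
    also have "\<dots> \<le> (\<Sum>a\<in>B. L_P * l1 (emp A us) (nb t xs))"
    proof (intro sum_mono)
      fix a assume "a \<in> B"
      then have "a \<in> A" using B by auto
      then have "snd a < K" by (rule snd_lt)
      then show "l1 (Qa xs us a) (Qb t xs a (us a)) \<le> L_P * l1 (emp A us) (nb t xs)"
        using P_lip[of "snd a" "xs a" "us a" "emp A xs" "emp A us" "emp A xs" "nb t xs"]
        by (simp add: Qa_def Qb_def)
    qed
    also have "\<dots> = real (card B) * L_P * l1 (emp A us) (nb t xs)" by simp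
    finally show ?thesis .
  qed
  have Gb: "measure_pmf.expectation (act_dist K N pol t xs) G \<le> sqrt (real CARD('x) * real (card B))"
    unfolding act_eq G_def using finA B
    by (intro conc_L1) (auto simp: sum_pmf_UNIV)
  have Eb: "measure_pmf.expectation (act_dist K N pol t xs) (\<lambda>us. l1 (emp A us) (nb t xs)) \<le> sqrt (real CARD('u)) / sqrt NN"
    unfolding act_eq NN_def using finA A_ne
    by (intro emp_conc) (simp_all add: nb_def pmf_nubar polA_def NN_def)
  have "measure_pmf.expectation (step t xs)
           (\<lambda>xs'. \<Sum>x'\<in>UNIV. \<bar>(\<Sum>a\<in>B. if xs' a = x' then 1 else 0) - TT t xs B x'\<bar>)
      = measure_pmf.expectation (act_dist K N pol t xs) (\<lambda>us. measure_pmf.expectation (next_dist K N P xs us)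
           (\<lambda>xs'. \<Sum>x'\<in>UNIV. \<bar>(\<Sum>a\<in>B. if xs' a = x' then 1 else 0) - TT t xs B x'\<bar>))"
    unfolding step_def by (rule E_bind[OF fin_act fin_next])
  also have "\<dots> \<le> measure_pmf.expectation (act_dist K N pol t xs)
       (\<lambda>us. sqrt (real CARD('x) * real (card B)) + real (card B) * L_P * l1 (emp A us) (nb t xs) + G us)"
  proof (rule integral_mono)
    show "integrable (measure_pmf (act_dist K N pol t xs)) (\<lambda>us. measure_pmf.expectation (next_dist K N P xs us)
           (\<lambda>xs'. \<Sum>x'\<in>UNIV. \<bar>(\<Sum>a\<in>B. if xs' a = x' then 1 else 0) - TT t xs B x'\<bar>))"
      by (simp add: integrable_measure_pmf_finite fin_act)
    show "integrable (measure_pmf (act_dist K N pol t xs)) (\<lambda>us. sqrt (real CARD('x) * real (card B)) + real (card B) * L_P * l1 (emp A us) (nb t xs) + G us)"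
      by (simp add: integrable_measure_pmf_finite fin_act)
    fix us
    have "measure_pmf.expectation (next_dist K N P xs us)
           (\<lambda>xs'. \<Sum>x'\<in>UNIV. \<bar>(\<Sum>a\<in>B. if xs' a = x' then 1 else 0) - TT t xs B x'\<bar>)
        \<le> measure_pmf.expectation (next_dist K N P xs us) (\<lambda>xs'. F1 us xs' + F2 us + G us)"
      by (intro integral_mono pw) (simp_all add: integrable_measure_pmf_finite fin_next)
    also have "\<dots> = measure_pmf.expectation (next_dist K N P xs us) (F1 us) + F2 us + G us"
      by (simp add: integrable_measure_pmf_finite fin_next)
    also have "\<dots> \<le> sqrt (real CARD('x) * real (card B)) + real (card B) * L_P * l1 (emp A us) (nb t xs) + G us"
      using F1b[of us] F2b[of us] by linarith
    finally show "measure_pmf.expectation (next_dist K N P xs us)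
           (\<lambda>xs'. \<Sum>x'\<in>UNIV. \<bar>(\<Sum>a\<in>B. if xs' a = x' then 1 else 0) - TT t xs B x'\<bar>)
        \<le> sqrt (real CARD('x) * real (card B)) + real (card B) * L_P * l1 (emp A us) (nb t xs) + G us" .
  qed
  also have "\<dots> = sqrt (real CARD('x) * real (card B))
      + real (card B) * L_P * measure_pmf.expectation (act_dist K N pol t xs) (\<lambda>us. l1 (emp A us) (nb t xs))
      + measure_pmf.expectation (act_dist K N pol t xs) G"
    by (simp add: integrable_measure_pmf_finite fin_act)
  also have "\<dots> \<le> sqrt (real CARD('x) * real (card B)) + real (card B) * L_P * (sqrt (real CARD('u)) / sqrt NN)
      + sqrt (real CARD('x) * real (card B))"
    using Eb Gb LP0 by (intro add_mono mult_left_mono order_refl) auto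
  finally show ?thesis by simp
qed

lemma pmf_PMF_emp:
  assumes k: "k < K"
  shows "pmf (P_MF P (pol t) (empJ xs)) (x',k) = TT t xs (Ak k) x' / NN"
proof -
  have "pmf (P_MF P (pol t) (empJ xs)) (x',k)
      = (\<Sum>x\<in>UNIV. pmf (empJ xs) (x,k) * (\<Sum>u\<in>UNIV. pmf (pol t k x (emp A xs)) u * pmf (P k x u (emp A xs) (nb t xs)) x'))"
    by (simp add: pmf_PMF[OF good_empJ k] marg_empJ nb_def sum_distrib_left mult.assoc)
  also have "\<dots> = (\<Sum>a\<in>Ak k. \<Sum>u\<in>UNIV. pmf (pol t k (xs a) (emp A xs)) u * pmf (P k (xs a) u (emp A xs) (nb t xs)) x') / NN"
    by (rule sum_class_empJ)
  also have "(\<Sum>a\<in>Ak k. \<Sum>u\<in>UNIV. pmf (pol t k (xs a) (emp A xs)) u * pmf (P k (xs a) u (emp A xs) (nb t xs)) x') = TT t xs (Ak k) x'"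
    unfolding TT_def by (intro sum.cong refl) (auto simp: Ak_def polA_def Qb_def)
  finally show ?thesis .
qed

lemma dJ_step_eq:
  "dJ K (pmf (empJ xs')) (pmf (P_MF P (pol t) (empJ xs)))
   = (\<Sum>k<K. \<Sum>x'\<in>UNIV. \<bar>(\<Sum>a\<in>Ak k. if xs' a = x' then 1 else 0) - TT t xs (Ak k) x'\<bar>) / NN"
proof -
  have e: "\<bar>a/NN - b/NN\<bar> = \<bar>a - b\<bar>/NN" for a b using NN_pos by (simp add: diff_divide_distrib[symmetric] abs_divide)
  have "dJ K (pmf (empJ xs')) (pmf (P_MF P (pol t) (empJ xs)))
     = (\<Sum>k<K. \<Sum>x'\<in>UNIV. \<bar>(\<Sum>a\<in>Ak k. if xs' a = x' then 1 else 0) - TT t xs (Ak k) x'\<bar> / NN)"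
    unfolding dJ_def pmf_empJ by (intro sum.cong refl) (simp add: pmf_PMF_emp e)
  then show ?thesis by (simp add: sum_divide_distrib)
qed

lemma dM_step_eq:
  "dM K (pmf (empJ xs')) (pmf (P_MF P (pol t) (empJ xs)))
   = (\<Sum>x'\<in>UNIV. \<bar>(\<Sum>a\<in>A. if xs' a = x' then 1 else 0) - TT t xs A x'\<bar>) / NN"
proof -
  have e1: "(\<Sum>k<K. pmf (empJ xs') (x',k)) = (\<Sum>a\<in>A. if xs' a = x' then 1 else 0) / NN" for x'
    using sum_Ak[of "\<lambda>a k. if xs' a = x' then 1 else (0::real)"]
    by (simp add: pmf_empJ sum_divide_distrib[symmetric])
  have e2: "(\<Sum>k<K. pmf (P_MF P (pol t) (empJ xs)) (x',k)) = TT t xs A x' / NN" for x'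
    using sum_Ak[of "\<lambda>a k. \<Sum>u\<in>UNIV. pmf (polA t xs a) u * pmf (Qb t xs a u) x'"]
    by (simp add: pmf_PMF_emp sum_divide_distrib[symmetric] TT_def)
  have e: "\<bar>a/NN - b/NN\<bar> = \<bar>a - b\<bar>/NN" for a b using NN_pos by (simp add: diff_divide_distrib[symmetric] abs_divide)
  show ?thesis
    unfolding dM_def e1 e2 e by (simp add: sum_divide_distrib[symmetric])
qed

definition "SN = (\<Sum>k<K. sqrt (real (N k)))"

lemma sum_N: "(\<Sum>k<K. real (N k)) = NN"
  by (simp add: NN_def cardA Npop_def)

lemma step_J:
  "measure_pmf.expectation (step t xs) (\<lambda>xs'. dJ K (pmf (empJ xs')) (pmf (P_MF P (pol t) (empJ xs))))
   \<le> (2 * sqrt (real CARD('x)) * SN + NN * L_P * (sqrt (real CARD('u)) / sqrt NN)) / NN"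
proof -
  have "measure_pmf.expectation (step t xs) (\<lambda>xs'. dJ K (pmf (empJ xs')) (pmf (P_MF P (pol t) (empJ xs))))
      = (\<Sum>k<K. measure_pmf.expectation (step t xs) (\<lambda>xs'. \<Sum>x'\<in>UNIV. \<bar>(\<Sum>a\<in>Ak k. if xs' a = x' then 1 else 0) - TT t xs (Ak k) x'\<bar>)) / NN"
    by (simp add: dJ_step_eq integrable_measure_pmf_finite fin_step)
  also have "\<dots> \<le> (\<Sum>k<K. 2 * sqrt (real CARD('x) * real (N k)) + real (N k) * L_P * (sqrt (real CARD('u)) / sqrt NN)) / NN"
  proof (intro divide_right_mono sum_mono)
    fix k assume "k \<in> {..<K}"
    then show "measure_pmf.expectation (step t xs) (\<lambda>xs'. \<Sum>x'\<in>UNIV. \<bar>(\<Sum>a\<in>Ak k. if xs' a = x' then 1 else 0) - TT t xs (Ak k) x'\<bar>)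
        \<le> 2 * sqrt (real CARD('x) * real (N k)) + real (N k) * L_P * (sqrt (real CARD('u)) / sqrt NN)"
      using state_B[OF Ak_sub, of t xs k] card_Ak[of k] by simp
  qed (use NN_pos in simp)
  also have "\<dots> = (2 * sqrt (real CARD('x)) * SN + NN * L_P * (sqrt (real CARD('u)) / sqrt NN)) / NN"
  proof -
    have a: "(\<Sum>k<K. 2 * sqrt (real CARD('x) * real (N k))) = 2 * sqrt (real CARD('x)) * SN"
      by (simp add: real_sqrt_mult SN_def sum_distrib_left mult.assoc)
    have b: "(\<Sum>k<K. real (N k) * L_P * c) = (\<Sum>k<K. real (N k)) * L_P * c" for c
      by (simp add: sum_distrib_right)
    show ?thesis by (simp only: sum.distrib a b sum_N)
  qed
  finally show ?thesis .
qed

lemma step_M: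
  "measure_pmf.expectation (step t xs) (\<lambda>xs'. dM K (pmf (empJ xs')) (pmf (P_MF P (pol t) (empJ xs))))
   \<le> (2 * sqrt (real CARD('x) * NN) + NN * L_P * (sqrt (real CARD('u)) / sqrt NN)) / NN"
proof -
  have "measure_pmf.expectation (step t xs) (\<lambda>xs'. dM K (pmf (empJ xs')) (pmf (P_MF P (pol t) (empJ xs))))
      = measure_pmf.expectation (step t xs) (\<lambda>xs'. \<Sum>x'\<in>UNIV. \<bar>(\<Sum>a\<in>A. if xs' a = x' then 1 else 0) - TT t xs A x'\<bar>) / NN"
    by (simp add: dM_step_eq)
  also have "\<dots> \<le> (2 * sqrt (real CARD('x) * NN) + NN * L_P * (sqrt (real CARD('u)) / sqrt NN)) / NN"
    using NN_pos state_B[OF order_refl, of t xs] by (intro divide_right_mono) (simp_all add: NN_def)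
  finally show ?thesis .
qed

end

lemma dJ_self[simp]: "dJ K f f = 0" by (simp add: dJ_def)
lemma dM_self[simp]: "dM K f f = 0" by (simp add: dM_def)

context mfsys
begin

definition "SP1 = 1 + L_P"
definition "SP2 = L_Q + L_P * (1 + L_Q)"
definition "SR1 = M_R + L_R"
definition "SR2 = M_R * L_Q + L_R * (1 + L_Q)"
definition "cU = sqrt (real CARD('u)) / sqrt NN"
definition "FJ = (2 * sqrt (real CARD('x)) * SN + NN * L_P * cU) / NN"
definition "FM = (2 * sqrt (real CARD('x) * NN) + NN * L_P * cU) / NN"

definition "mu x0 t = mf_dist P pol (empJ x0) t"
definition "Jt x0 t xs = dJ K (pmf (empJ xs)) (pmf (mu x0 t))"
definition "Mt x0 t xs = dM K (pmf (empJ xs)) (pmf (mu x0 t))"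
definition "Dv x0 t = measure_pmf.expectation (state_dist K N P pol x0 t) (\<lambda>xs. SP1 * Jt x0 t xs + SP2 * Mt x0 t xs)"
definition "Qv x0 t = measure_pmf.expectation (state_dist K N P pol x0 t) (\<lambda>xs. SR1 * Jt x0 t xs + SR2 * Mt x0 t xs)"
definition "RN t xs = measure_pmf.expectation (act_dist K N pol t xs)
      (\<lambda>us. (\<Sum>a\<in>A. r (snd a) (xs a) (us a) (emp A xs) (emp A us)) / NN)"

lemma good_mu: "good K (mu x0 t)"
  unfolding mu_def by (intro good_mf good_empJ)

lemma mu_Suc: "mu x0 (Suc t) = P_MF P (pol t) (mu x0 t)"
  by (simp add: mu_def)

lemma state_Suc: "state_dist K N P pol x0 (Suc t) = bind_pmf (state_dist K N P pol x0 t) (step t)"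
  unfolding step_def[abs_def] by simp

declare state_dist.simps(2)[simp del]

lemma int_state[simp]: "integrable (measure_pmf (state_dist K N P pol x0 t)) (f :: _ \<Rightarrow> real)"
  by (simp add: integrable_measure_pmf_finite fin_state)

lemma int_step[simp]: "integrable (measure_pmf (step t xs)) (f :: _ \<Rightarrow> real)"
  by (simp add: integrable_measure_pmf_finite fin_step)

lemma SP_nonneg: "SP1 \<ge> 0" "SP2 \<ge> 0" "SR1 \<ge> 0" "SR2 \<ge> 0"
  using LP0 LQ0 MR0 LR0 by (auto simp: SP1_def SP2_def SR1_def SR2_def)

lemma inner_J:
  "measure_pmf.expectation (step t xs) (\<lambda>xs'. Jt x0 (Suc t) xs') \<le> FJ + (SP1 * Jt x0 t xs + SP2 * Mt x0 t xs)"
proof -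
  have "measure_pmf.expectation (step t xs) (\<lambda>xs'. Jt x0 (Suc t) xs')
     \<le> measure_pmf.expectation (step t xs) (\<lambda>xs'. dJ K (pmf (empJ xs')) (pmf (P_MF P (pol t) (empJ xs)))
            + dJ K (pmf (P_MF P (pol t) (empJ xs))) (pmf (mu x0 (Suc t))))"
    by (intro integral_mono) (simp_all add: integrable_measure_pmf_finite fin_step Jt_def dJ_tri)
  also have "\<dots> = measure_pmf.expectation (step t xs) (\<lambda>xs'. dJ K (pmf (empJ xs')) (pmf (P_MF P (pol t) (empJ xs))))
            + dJ K (pmf (P_MF P (pol t) (empJ xs))) (pmf (mu x0 (Suc t)))"
    by (simp add: integrable_measure_pmf_finite fin_step)
  also have "\<dots> \<le> FJ + (SP1 * Jt x0 t xs + SP2 * Mt x0 t xs)"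
    using step_J[of t xs] lip_P[OF good_empJ[of xs] good_mu[of x0 t], of t]
    by (intro add_mono) (simp_all add: FJ_def cU_def mu_Suc SP1_def SP2_def Jt_def Mt_def)
  finally show ?thesis .
qed

lemma inner_M:
  "measure_pmf.expectation (step t xs) (\<lambda>xs'. Mt x0 (Suc t) xs') \<le> FM + (SP1 * Jt x0 t xs + SP2 * Mt x0 t xs)"
proof -
  have "measure_pmf.expectation (step t xs) (\<lambda>xs'. Mt x0 (Suc t) xs')
     \<le> measure_pmf.expectation (step t xs) (\<lambda>xs'. dM K (pmf (empJ xs')) (pmf (P_MF P (pol t) (empJ xs)))
            + dM K (pmf (P_MF P (pol t) (empJ xs))) (pmf (mu x0 (Suc t))))"
    by (intro integral_mono) (simp_all add: integrable_measure_pmf_finite fin_step Mt_def dM_tri)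
  also have "\<dots> = measure_pmf.expectation (step t xs) (\<lambda>xs'. dM K (pmf (empJ xs')) (pmf (P_MF P (pol t) (empJ xs))))
            + dM K (pmf (P_MF P (pol t) (empJ xs))) (pmf (mu x0 (Suc t)))"
    by (simp add: integrable_measure_pmf_finite fin_step)
  also have "\<dots> \<le> FM + (SP1 * Jt x0 t xs + SP2 * Mt x0 t xs)"
    using step_M[of t xs] lip_P[OF good_empJ[of xs] good_mu[of x0 t], of t]
      dM_le_dJ[of K "pmf (P_MF P (pol t) (empJ xs))" "pmf (mu x0 (Suc t))"]
    by (intro add_mono) (simp_all add: FM_def cU_def mu_Suc SP1_def SP2_def Jt_def Mt_def)
  finally show ?thesis .
qed

lemma rec_J:
  "measure_pmf.expectation (state_dist K N P pol x0 (Suc t)) (Jt x0 (Suc t)) \<le> FJ + Dv x0 t"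
proof -
  have "measure_pmf.expectation (state_dist K N P pol x0 (Suc t)) (Jt x0 (Suc t))
      = measure_pmf.expectation (state_dist K N P pol x0 t) (\<lambda>xs. measure_pmf.expectation (step t xs) (Jt x0 (Suc t)))"
    unfolding state_Suc by (rule E_bind[OF fin_state fin_step])
  also have "\<dots> \<le> measure_pmf.expectation (state_dist K N P pol x0 t) (\<lambda>xs. FJ + (SP1 * Jt x0 t xs + SP2 * Mt x0 t xs))"
    using inner_J by (intro integral_mono) (simp_all add: integrable_measure_pmf_finite fin_state)
  also have "\<dots> = FJ + Dv x0 t"
    by (simp add: Dv_def integrable_measure_pmf_finite fin_state)
  finally show ?thesis .
qed

lemma rec_M:
  "measure_pmf.expectation (state_dist K N P pol x0 (Suc t)) (Mt x0 (Suc t)) \<le> FM + Dv x0 t"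
proof -
  have "measure_pmf.expectation (state_dist K N P pol x0 (Suc t)) (Mt x0 (Suc t))
      = measure_pmf.expectation (state_dist K N P pol x0 t) (\<lambda>xs. measure_pmf.expectation (step t xs) (Mt x0 (Suc t)))"
    unfolding state_Suc by (rule E_bind[OF fin_state fin_step])
  also have "\<dots> \<le> measure_pmf.expectation (state_dist K N P pol x0 t) (\<lambda>xs. FM + (SP1 * Jt x0 t xs + SP2 * Mt x0 t xs))"
    using inner_M by (intro integral_mono) (simp_all add: integrable_measure_pmf_finite fin_state)
  also have "\<dots> = FM + Dv x0 t"
    by (simp add: Dv_def integrable_measure_pmf_finite fin_state)
  finally show ?thesis .
qed

lemma Dv_0: "Dv x0 0 = 0" by (simp add: Dv_def Jt_def Mt_def mu_def)
lemma Qv_0: "Qv x0 0 = 0" by (simp add: Qv_def Jt_def Mt_def mu_def)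

lemma Dv_Suc: "Dv x0 (Suc t) \<le> (SP1 * FJ + SP2 * FM) + (SP1 + SP2) * Dv x0 t"
proof -
  have "Dv x0 (Suc t) = SP1 * measure_pmf.expectation (state_dist K N P pol x0 (Suc t)) (Jt x0 (Suc t))
       + SP2 * measure_pmf.expectation (state_dist K N P pol x0 (Suc t)) (Mt x0 (Suc t))"
    by (simp add: Dv_def integrable_measure_pmf_finite fin_state)
  also have "\<dots> \<le> SP1 * (FJ + Dv x0 t) + SP2 * (FM + Dv x0 t)"
    using rec_J rec_M SP_nonneg by (intro add_mono mult_left_mono) auto
  finally show ?thesis by (simp add: algebra_simps)
qed

lemma Qv_Suc: "Qv x0 (Suc t) \<le> (SR1 * FJ + SR2 * FM) + (SR1 + SR2) * Dv x0 t"
proof -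
  have "Qv x0 (Suc t) = SR1 * measure_pmf.expectation (state_dist K N P pol x0 (Suc t)) (Jt x0 (Suc t))
       + SR2 * measure_pmf.expectation (state_dist K N P pol x0 (Suc t)) (Mt x0 (Suc t))"
    by (simp add: Qv_def integrable_measure_pmf_finite fin_state)
  also have "\<dots> \<le> SR1 * (FJ + Dv x0 t) + SR2 * (FM + Dv x0 t)"
    using rec_J rec_M SP_nonneg by (intro add_mono mult_left_mono) auto
  finally show ?thesis by (simp add: algebra_simps)
qed


end

context mfsys
begin

lemma rew_diff:
  "\<bar>measure_pmf.expectation (state_dist K N P pol x0 t) (RN t) - RMF t (mu x0 t)\<bar> \<le> L_R * cU + Qv x0 t"
proof -
  let ?S = "state_dist K N P pol x0 t"
  have e1: "measure_pmf.expectation ?S (\<lambda>xs. RN t xs - RMF t (empJ xs)) = measure_pmf.expectation ?S (RN t) - measure_pmf.expectation ?S (\<lambda>xs. RMF t (empJ xs))"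
    by (rule Bochner_Integration.integral_diff) (rule int_state)+
  have e2: "measure_pmf.expectation ?S (\<lambda>xs. RMF t (empJ xs) - RMF t (mu x0 t)) = measure_pmf.expectation ?S (\<lambda>xs. RMF t (empJ xs)) - measure_pmf.expectation ?S (\<lambda>xs. RMF t (mu x0 t))"
    by (rule Bochner_Integration.integral_diff) (rule int_state)+
  have e3: "measure_pmf.expectation ?S (\<lambda>xs. RMF t (mu x0 t)) = RMF t (mu x0 t)"
    by simp
  have b1: "\<bar>measure_pmf.expectation ?S (\<lambda>xs. RN t xs - RMF t (empJ xs))\<bar> \<le> L_R * cU"
  proof -
    have "\<bar>measure_pmf.expectation ?S (\<lambda>xs. RN t xs - RMF t (empJ xs))\<bar> \<le> measure_pmf.expectation ?S (\<lambda>xs. \<bar>RN t xs - RMF t (empJ xs)\<bar>)"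
      by (rule integral_abs_bound)
    also have "\<dots> \<le> measure_pmf.expectation ?S (\<lambda>xs. L_R * cU)"
    proof (rule integral_mono)
      fix xs
      show "\<bar>RN t xs - RMF t (empJ xs)\<bar> \<le> L_R * cU"
        unfolding RN_def cU_def by (rule rew_step)
    qed (rule int_state)+
    also have "\<dots> = L_R * cU" by simp
    finally show ?thesis .
  qed
  have b2: "\<bar>measure_pmf.expectation ?S (\<lambda>xs. RMF t (empJ xs) - RMF t (mu x0 t))\<bar> \<le> Qv x0 t"
  proof -
    have "\<bar>measure_pmf.expectation ?S (\<lambda>xs. RMF t (empJ xs) - RMF t (mu x0 t))\<bar> \<le> measure_pmf.expectation ?S (\<lambda>xs. \<bar>RMF t (empJ xs) - RMF t (mu x0 t)\<bar>)"
      by (rule integral_abs_bound)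
    also have "\<dots> \<le> Qv x0 t"
      unfolding Qv_def
    proof (rule integral_mono)
      fix xs
      show "\<bar>RMF t (empJ xs) - RMF t (mu x0 t)\<bar> \<le> SR1 * Jt x0 t xs + SR2 * Mt x0 t xs"
        unfolding SR1_def SR2_def Jt_def Mt_def by (rule lip_R[OF good_empJ good_mu])
    qed (rule int_state)+
    finally show ?thesis .
  qed
  show ?thesis using b1 b2 unfolding e1 e2 e3 by linarith
qed

end

lemma E_abs_le:
  fixes f :: "'a \<Rightarrow> real"
  assumes "finite (set_pmf p)" "\<And>x. \<bar>f x\<bar> \<le> B"
  shows "\<bar>measure_pmf.expectation p f\<bar> \<le> B"
proof -
  have "\<bar>measure_pmf.expectation p f\<bar> \<le> measure_pmf.expectation p (\<lambda>x. \<bar>f x\<bar>)"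
    by (rule integral_abs_bound)
  also have "\<dots> \<le> measure_pmf.expectation p (\<lambda>x. B)"
    using assms by (intro integral_mono) (simp_all add: integrable_measure_pmf_finite)
  also have "\<dots> = B" by simp
  finally show ?thesis .
qed

lemma abs_suminf_le:
  fixes f g :: "nat \<Rightarrow> real"
  assumes g: "summable g" and fg: "\<And>n. \<bar>f n\<bar> \<le> g n"
  shows "\<bar>suminf f\<bar> \<le> suminf g"
proof -
  have sf: "summable f"
    by (rule summable_comparison_test'[OF g]) (use fg in simp)
  have "suminf f \<le> suminf g" using fg by (intro suminf_le sf g) (auto simp: abs_le_iff)
  moreover have "- suminf f \<le> suminf g"
  proof -
    have "(\<Sum>n. - f n) \<le> suminf g" using fg by (intro suminf_le summable_minus sf g) (auto simp: abs_le_iff)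
    then show ?thesis by (simp add: suminf_minus[OF sf])
  qed
  ultimately show ?thesis by linarith
qed

lemma sqrt_sum_le:
  fixes f :: "nat \<Rightarrow> real"
  assumes "\<And>k. 0 \<le> f k"
  shows "sqrt (\<Sum>k<n. f k) \<le> (\<Sum>k<n. sqrt (f k))"
proof (induction n)
  case 0 then show ?case by simp
next
  case (Suc n)
  have "sqrt (\<Sum>k<Suc n. f k) = sqrt ((\<Sum>k<n. f k) + f n)" by simp
  also have "\<dots> \<le> sqrt (\<Sum>k<n. f k) + sqrt (f n)"
    using assms by (intro sqrt_add_le_add_sqrt sum_nonneg) auto
  also have "\<dots> \<le> (\<Sum>k<n. sqrt (f k)) + sqrt (f n)" using Suc by simp
  finally show ?case by simp
qed

context mfsys
begin

lemma RMF_bound: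
  assumes g: "good K \<mu>"
  shows "\<bar>RMF t \<mu>\<bar> \<le> M_R"
proof -
  let ?m = "map_pmf fst \<mu>" and ?n = "map_pmf fst (nu_MF (pol t) \<mu>)"
  have "\<bar>RMF t \<mu>\<bar> \<le> (\<Sum>k<K. \<Sum>x\<in>UNIV. \<Sum>u\<in>UNIV. \<bar>pmf \<mu> (x,k) * pmf (pol t k x ?m) u * r k x u ?m ?n\<bar>)"
    unfolding RMF_def r_MF_def
    by (rule order_trans[OF sum_abs], rule sum_mono, rule order_trans[OF sum_abs], rule sum_mono, rule sum_abs)
  also have "\<dots> \<le> (\<Sum>k<K. \<Sum>x\<in>UNIV. \<Sum>u\<in>UNIV. pmf \<mu> (x,k) * pmf (pol t k x ?m) u * M_R)"
  proof (intro sum_mono)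
    fix k x u assume "k \<in> {..<K}"
    then show "\<bar>pmf \<mu> (x,k) * pmf (pol t k x ?m) u * r k x u ?m ?n\<bar> \<le> pmf \<mu> (x,k) * pmf (pol t k x ?m) u * M_R"
      using r_bound[of k x u ?m ?n] by (simp add: abs_mult mult_left_mono)
  qed
  also have "\<dots> = M_R"
    using sum_good[OF g] by (simp add: sum_distrib_right[symmetric] sum_distrib_left[symmetric] sum_pmf_UNIV mult.assoc)
  finally show ?thesis .
qed

lemma RN_bound: "\<bar>RN t xs\<bar> \<le> M_R"
  unfolding RN_def
proof (rule E_abs_le[OF fin_act])
  fix us
  have "\<bar>\<Sum>a\<in>A. r (snd a) (xs a) (us a) (emp A xs) (emp A us)\<bar> \<le> (\<Sum>a\<in>A. M_R)"
    by (rule order_trans[OF sum_abs], rule sum_mono) (use r_bound snd_lt in blast)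
  also have "\<dots> = NN * M_R" by (simp add: NN_def)
  finally show "\<bar>(\<Sum>a\<in>A. r (snd a) (xs a) (us a) (emp A xs) (emp A us)) / NN\<bar> \<le> M_R"
    by (rule div_le_aux[OF NN_pos])
qed

lemma summable_bounded:
  fixes f :: "nat \<Rightarrow> real"
  assumes "0 \<le> \<gamma>" "\<gamma> < 1" "\<And>t. \<bar>f t\<bar> \<le> M_R"
  shows "summable (\<lambda>t. \<gamma> ^ t * f t)"
proof (rule summable_comparison_test'[where g="\<lambda>t. M_R * \<gamma> ^ t"])
  show "summable (\<lambda>t. M_R * \<gamma> ^ t)" using assms by (intro summable_mult summable_geometric) auto
  fix t
  show "norm (\<gamma> ^ t * f t) \<le> M_R * \<gamma> ^ t"
    using assms(3)[of t] assms(1) by (simp add: abs_mult mult.commute mult_right_mono)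
qed

lemma emp_value_eq:
  assumes "0 \<le> \<gamma>" "\<gamma> < 1"
  shows "emp_value K N r P pol \<gamma> x0 = (\<Sum>t. \<gamma> ^ t * measure_pmf.expectation (state_dist K N P pol x0 t) (RN t))"
proof -
  define g where "g a t xs = measure_pmf.expectation (act_dist K N pol t xs) (\<lambda>us. r (snd a) (xs a) (us a) (emp A xs) (emp A us))" for a t xs
  define f where "f a t = \<gamma> ^ t * measure_pmf.expectation (state_dist K N P pol x0 t) (g a t)" for a t
  have sf: "summable (f a)" if "a \<in> A" for a
    unfolding f_def
  proof (rule summable_bounded[OF assms])
    fix t
    show "\<bar>measure_pmf.expectation (state_dist K N P pol x0 t) (g a t)\<bar> \<le> M_R"
      unfolding g_def using that snd_lt r_bound
      by (intro E_abs_le[OF fin_state] E_abs_le[OF fin_act]) auto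
  qed
  have "emp_value K N r P pol \<gamma> x0 = (1 / NN) * (\<Sum>a\<in>A. suminf (f a))"
    by (simp add: emp_value_def f_def[abs_def] g_def[abs_def] NN_def cardA)
  also have "\<dots> = (1 / NN) * (\<Sum>t. \<Sum>a\<in>A. f a t)"
    by (simp add: suminf_sum sf)
  also have "\<dots> = (\<Sum>t. (1 / NN) * (\<Sum>a\<in>A. f a t))"
    by (rule suminf_mult[symmetric], rule summable_sum, rule sf)
  also have "\<dots> = (\<Sum>t. \<gamma> ^ t * measure_pmf.expectation (state_dist K N P pol x0 t) (RN t))"
  proof (rule suminf_cong)
    fix t
    have "(\<Sum>a\<in>A. f a t) = \<gamma> ^ t * measure_pmf.expectation (state_dist K N P pol x0 t) (\<lambda>xs. \<Sum>a\<in>A. g a t xs)"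
      by (simp add: f_def sum_distrib_left[symmetric])
    also have "(\<lambda>xs. \<Sum>a\<in>A. g a t xs) = (\<lambda>xs. NN * RN t xs)"
    proof
      fix xs
      have "(\<Sum>a\<in>A. g a t xs) = measure_pmf.expectation (act_dist K N pol t xs) (\<lambda>us. \<Sum>a\<in>A. r (snd a) (xs a) (us a) (emp A xs) (emp A us))"
        unfolding g_def by (rule Bochner_Integration.integral_sum[symmetric]) (simp add: integrable_measure_pmf_finite fin_act)
      also have "\<dots> = NN * RN t xs"
        unfolding RN_def using NN_pos by simp
      finally show "(\<Sum>a\<in>A. g a t xs) = NN * RN t xs" .
    qed
    finally show "(1 / NN) * (\<Sum>a\<in>A. f a t) = \<gamma> ^ t * measure_pmf.expectation (state_dist K N P pol x0 t) (RN t)"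
      using NN_pos by simp
  qed
  finally show ?thesis .
qed

lemma mf_value_eq:
  "mf_value K r P pol \<gamma> (empJ x0) = (\<Sum>t. \<gamma> ^ t * RMF t (mu x0 t))"
  by (simp add: mf_value_def RMF_def mu_def)

end

lemma alg_FJ:
  fixes x u n s L :: real
  assumes "x \<ge> 1" "u \<ge> 1" "n > 0" "s \<ge> n" "L \<ge> 0"
  shows "(2 * x * s + n\<^sup>2 * L * (u / n)) / n\<^sup>2 \<le> (2 + L) * (x * u) * s / n\<^sup>2"
proof (rule divide_right_mono)
  have s0: "s \<ge> 0" using assms by linarith
  have a: "2 * x * s \<le> 2 * (x * u) * s"
  proof -
    have "x * s * 1 \<le> x * s * u" using assms s0 by (intro mult_left_mono) auto
    then show ?thesis by (simp add: algebra_simps)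
  qed
  have b: "n\<^sup>2 * L * (u / n) \<le> L * (x * u) * s"
  proof -
    have "n\<^sup>2 * L * (u / n) = L * u * n" using assms by (simp add: power2_eq_square field_simps)
    also have "\<dots> \<le> L * u * (x * s)"
    proof (rule mult_left_mono)
      have "n \<le> 1 * s" using assms by simp
      also have "\<dots> \<le> x * s" using assms s0 by (intro mult_right_mono) auto
      finally show "n \<le> x * s" .
      show "0 \<le> L * u" using assms by simp
    qed
    finally show ?thesis by (simp add: algebra_simps)
  qed
  show "2 * x * s + n\<^sup>2 * L * (u / n) \<le> (2 + L) * (x * u) * s"
    using a b by (simp add: algebra_simps)
qed simp

lemma alg_FM:
  fixes x u n L :: real
  assumes "x \<ge> 1" "u \<ge> 1" "n > 0" "L \<ge> 0"
  shows "(2 * (x * n) + n\<^sup>2 * L * (u / n)) / n\<^sup>2 \<le> (2 + L) * (x * u) / n"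
proof -
  have e: "(2 * (x * n) + n\<^sup>2 * L * (u / n)) / n\<^sup>2 = (2 * x + L * u) / n"
    using assms by (simp add: power2_eq_square field_simps)
  have "2 * x + L * u \<le> (2 + L) * (x * u)"
  proof -
    have "x * 1 \<le> x * u" using assms by (intro mult_left_mono) auto
    moreover have "L * (1 * u) \<le> L * (x * u)" using assms by (intro mult_left_mono mult_right_mono) auto
    ultimately show ?thesis by (simp add: algebra_simps)
  qed
  then show ?thesis unfolding e using assms by (intro divide_right_mono) auto
qed

lemma aux1: "(S::real) > 1 \<Longrightarrow> G + S * (G * (S ^ t - 1) / (S - 1)) = G * (S ^ Suc t - 1) / (S - 1)"
proof -
  assume "S > 1"
  then have h: "S - 1 \<noteq> 0" "S \<noteq> 1" by auto
  show ?thesis using h by (simp add: field_simps)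
qed

lemma aux2: "c + (E0 + R * (G * (S ^ s - 1) / (S - 1))) = (c + E0 - R * G / (S - 1)) + R * G / ((S::real) - 1) * S ^ s"
  by (simp add: divide_inverse algebra_simps)

lemma aux3: "(g::real) * (E0 - D) * (1 / (1 - g)) + g * D * (1 / (1 - g * S)) + 0 + c * (1 / (1 - g))
      = c / (1 - g) + g * E0 / (1 - g) + D * (g / (1 - g * S) - g / (1 - g))"
  by (simp add: divide_inverse algebra_simps)

context mfsys
begin

lemma Dv_closed:
  assumes SP: "SP1 + SP2 > 1"
  shows "Dv x0 t \<le> (SP1 * FJ + SP2 * FM) * ((SP1 + SP2) ^ t - 1) / (SP1 + SP2 - 1)"
proof (induction t)
  case 0 then show ?case by (simp add: Dv_0)
next
  case (Suc t)
  let ?G = "SP1 * FJ + SP2 * FM" and ?S = "SP1 + SP2"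
  have "Dv x0 (Suc t) \<le> ?G + ?S * Dv x0 t" by (rule Dv_Suc)
  also have "\<dots> \<le> ?G + ?S * (?G * (?S ^ t - 1) / (?S - 1))"
    using Suc SP by (intro add_left_mono mult_left_mono) auto
  also have "\<dots> = ?G * (?S ^ Suc t - 1) / (?S - 1)"
    using SP by (rule aux1)
  finally show ?case .
qed

definition "bnd t = L_R * cU + (case t of 0 \<Rightarrow> 0 | Suc s \<Rightarrow>
     (SR1 * FJ + SR2 * FM) + (SR1 + SR2) * ((SP1 * FJ + SP2 * FM) * ((SP1 + SP2) ^ s - 1) / (SP1 + SP2 - 1)))"

lemma diff_bound:
  assumes SP: "SP1 + SP2 > 1"
  shows "\<bar>measure_pmf.expectation (state_dist K N P pol x0 t) (RN t) - RMF t (mu x0 t)\<bar> \<le> bnd t"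
proof (cases t)
  case 0
  then show ?thesis using rew_diff[of x0 t] by (simp add: bnd_def Qv_0)
next
  case (Suc s)
  have "Qv x0 (Suc s) \<le> (SR1 * FJ + SR2 * FM) + (SR1 + SR2) * Dv x0 s" by (rule Qv_Suc)
  also have "\<dots> \<le> (SR1 * FJ + SR2 * FM) + (SR1 + SR2) * ((SP1 * FJ + SP2 * FM) * ((SP1 + SP2) ^ s - 1) / (SP1 + SP2 - 1))"
    using Dv_closed[OF SP, of x0 s] SP_nonneg by (intro add_left_mono mult_left_mono) auto
  finally show ?thesis using rew_diff[of x0 t] Suc by (simp add: bnd_def)
qed

lemma bnd_sums:
  assumes g: "0 \<le> \<gamma>" "\<gamma> < 1" and SP: "SP1 + SP2 > 1" and gS: "\<gamma> * (SP1 + SP2) < 1"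
  shows "(\<lambda>t. \<gamma> ^ t * bnd t) sums
     (L_R * cU / (1 - \<gamma>) + \<gamma> * (SR1 * FJ + SR2 * FM) / (1 - \<gamma>)
      + (SR1 + SR2) * (SP1 * FJ + SP2 * FM) / (SP1 + SP2 - 1) * (\<gamma> / (1 - \<gamma> * (SP1 + SP2)) - \<gamma> / (1 - \<gamma>)))"
proof -
  define c where "c = L_R * cU"
  define E0 where "E0 = SR1 * FJ + SR2 * FM"
  define S where "S = SP1 + SP2"
  define D where "D = (SR1 + SR2) * (SP1 * FJ + SP2 * FM) / (SP1 + SP2 - 1)"
  have S1: "S > 1" using SP by (simp add: S_def)
  have gS': "\<gamma> * S < 1" using gS by (simp add: S_def)
  have bS: "bnd (Suc s) = (c + E0 - D) + D * S ^ s" for s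
    unfolding bnd_def c_def E0_def D_def S_def nat.case by (rule aux2)
  have hS: "\<gamma> ^ Suc s * bnd (Suc s) - c * \<gamma> ^ Suc s = (\<gamma> * (E0 - D)) * \<gamma> ^ s + (\<gamma> * D) * (\<gamma> * S) ^ s" for s
    by (simp add: bS power_mult_distrib algebra_simps)
  have s1: "(\<lambda>s. \<gamma> ^ s) sums (1 / (1 - \<gamma>))" using g by (intro geometric_sums) auto
  have s2: "(\<lambda>s. (\<gamma> * S) ^ s) sums (1 / (1 - \<gamma> * S))"
    using g gS' S1 by (intro geometric_sums) (auto simp: abs_of_nonneg)
  have "(\<lambda>s. \<gamma> ^ Suc s * bnd (Suc s) - c * \<gamma> ^ Suc s) sums ((\<gamma> * (E0 - D)) * (1 / (1 - \<gamma>)) + (\<gamma> * D) * (1 / (1 - \<gamma> * S)))"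
    unfolding hS by (intro sums_add sums_mult s1 s2)
  then have h1: "(\<lambda>t. \<gamma> ^ t * bnd t - c * \<gamma> ^ t) sums ((\<gamma> * (E0 - D)) * (1 / (1 - \<gamma>)) + (\<gamma> * D) * (1 / (1 - \<gamma> * S)) + 0)"
    by (subst (asm) sums_Suc_iff) (simp add: bnd_def c_def)
  have h2: "(\<lambda>t. c * \<gamma> ^ t) sums (c * (1 / (1 - \<gamma>)))" by (intro sums_mult s1)
  have "(\<lambda>t. (\<gamma> ^ t * bnd t - c * \<gamma> ^ t) + c * \<gamma> ^ t) sums
      ((\<gamma> * (E0 - D)) * (1 / (1 - \<gamma>)) + (\<gamma> * D) * (1 / (1 - \<gamma> * S)) + 0 + c * (1 / (1 - \<gamma>)))"
    by (rule sums_add[OF h1 h2])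
  then have "(\<lambda>t. \<gamma> ^ t * bnd t) sums (c / (1 - \<gamma>) + \<gamma> * E0 / (1 - \<gamma>) + D * (\<gamma> / (1 - \<gamma> * S) - \<gamma> / (1 - \<gamma>)))"
    unfolding aux3 by simp
  then show ?thesis by (simp only: c_def E0_def D_def S_def)
qed

lemma main_bound:
  assumes g: "0 \<le> \<gamma>" "\<gamma> < 1" and SP: "SP1 + SP2 > 1" and gS: "\<gamma> * (SP1 + SP2) < 1"
  shows "\<bar>emp_value K N r P pol \<gamma> x0 - mf_value K r P pol \<gamma> (empJ x0)\<bar> \<le>
     L_R * cU / (1 - \<gamma>) + \<gamma> * (SR1 * FJ + SR2 * FM) / (1 - \<gamma>)
      + (SR1 + SR2) * (SP1 * FJ + SP2 * FM) / (SP1 + SP2 - 1) * (\<gamma> / (1 - \<gamma> * (SP1 + SP2)) - \<gamma> / (1 - \<gamma>))"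
proof -
  let ?e = "\<lambda>t. \<gamma> ^ t * measure_pmf.expectation (state_dist K N P pol x0 t) (RN t)"
  let ?m = "\<lambda>t. \<gamma> ^ t * RMF t (mu x0 t)"
  have se: "summable ?e"
    by (intro summable_bounded[OF g] E_abs_le[OF fin_state] RN_bound)
  have sm: "summable ?m"
    by (intro summable_bounded[OF g] RMF_bound good_mu)
  have eqd: "emp_value K N r P pol \<gamma> x0 - mf_value K r P pol \<gamma> (empJ x0) = (\<Sum>t. ?e t - ?m t)"
    unfolding emp_value_eq[OF g] mf_value_eq by (rule suminf_diff[OF se sm])
  have le: "\<bar>\<Sum>t. ?e t - ?m t\<bar> \<le> (\<Sum>t. \<gamma> ^ t * bnd t)"
  proof (rule abs_suminf_le)
    show "summable (\<lambda>t. \<gamma> ^ t * bnd t)" using bnd_sums[OF g SP gS] by (rule sums_summable)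
    fix t
    have "\<bar>?e t - ?m t\<bar> = \<gamma> ^ t * \<bar>measure_pmf.expectation (state_dist K N P pol x0 t) (RN t) - RMF t (mu x0 t)\<bar>"
      using g by (simp add: right_diff_distrib[symmetric] abs_mult)
    also have "\<dots> \<le> \<gamma> ^ t * bnd t"
      using g diff_bound[OF SP, of x0 t] by (intro mult_left_mono) auto
    finally show "\<bar>?e t - ?m t\<bar> \<le> \<gamma> ^ t * bnd t" .
  qed
  have eqV: "(\<Sum>t. \<gamma> ^ t * bnd t) = L_R * cU / (1 - \<gamma>) + \<gamma> * (SR1 * FJ + SR2 * FM) / (1 - \<gamma>)
      + (SR1 + SR2) * (SP1 * FJ + SP2 * FM) / (SP1 + SP2 - 1) * (\<gamma> / (1 - \<gamma> * (SP1 + SP2)) - \<gamma> / (1 - \<gamma>))"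
    using bnd_sums[OF g SP gS] by (rule sums_unique[symmetric])
  show ?thesis unfolding eqd using le eqV by linarith
qed

end

context mfsys
begin

lemma sqrtNN_le_SN: "sqrt NN \<le> SN"
  unfolding SN_def sum_N[symmetric] by (rule sqrt_sum_le) simp

lemma FJ_le: "FJ \<le> (2 + L_P) * sqrt (real CARD('x) * real CARD('u)) * SN / NN"
proof -
  have n: "sqrt NN > 0" using NN_pos by simp
  have NNsq: "NN = (sqrt NN)\<^sup>2" using NN_pos by simp
  have x1: "sqrt (real CARD('x)) \<ge> 1" by simp
  have u1: "sqrt (real CARD('u)) \<ge> 1" by simp
  have "FJ = (2 * sqrt (real CARD('x)) * SN + (sqrt NN)\<^sup>2 * L_P * (sqrt (real CARD('u)) / sqrt NN)) / (sqrt NN)\<^sup>2"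
    unfolding FJ_def cU_def using NNsq by simp
  also have "\<dots> \<le> (2 + L_P) * (sqrt (real CARD('x)) * sqrt (real CARD('u))) * SN / (sqrt NN)\<^sup>2"
    by (rule alg_FJ[OF x1 u1 n sqrtNN_le_SN LP0])
  also have "\<dots> = (2 + L_P) * sqrt (real CARD('x) * real CARD('u)) * SN / NN"
    using NNsq by (simp add: real_sqrt_mult)
  finally show ?thesis .
qed

lemma FM_le: "FM \<le> (2 + L_P) * sqrt (real CARD('x) * real CARD('u)) / sqrt NN"
proof -
  have n: "sqrt NN > 0" using NN_pos by simp
  have NNsq: "NN = (sqrt NN)\<^sup>2" using NN_pos by simp
  have x1: "sqrt (real CARD('x)) \<ge> 1" by simp
  have u1: "sqrt (real CARD('u)) \<ge> 1" by simp
  have "FM = (2 * (sqrt (real CARD('x)) * sqrt NN) + (sqrt NN)\<^sup>2 * L_P * (sqrt (real CARD('u)) / sqrt NN)) / (sqrt NN)\<^sup>2"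
    unfolding FM_def cU_def using NNsq by (simp add: real_sqrt_mult)
  also have "\<dots> \<le> (2 + L_P) * (sqrt (real CARD('x)) * sqrt (real CARD('u))) / sqrt NN"
    by (rule alg_FM[OF x1 u1 n LP0])
  also have "\<dots> = (2 + L_P) * sqrt (real CARD('x) * real CARD('u)) / sqrt NN"
    by (simp add: real_sqrt_mult)
  finally show ?thesis .
qed

lemma comb_le:
  assumes "a \<ge> 0" "b \<ge> 0"
  shows "a * FJ + b * FM \<le> (2 + L_P) * sqrt (real CARD('x) * real CARD('u)) * (a / NN * SN + b / sqrt NN)"
proof -
  have "a * FJ + b * FM \<le> a * ((2 + L_P) * sqrt (real CARD('x) * real CARD('u)) * SN / NN)
      + b * ((2 + L_P) * sqrt (real CARD('x) * real CARD('u)) / sqrt NN)"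
    using assms FJ_le FM_le by (intro add_mono mult_left_mono) auto
  also have "\<dots> = (2 + L_P) * sqrt (real CARD('x) * real CARD('u)) * (a / NN * SN + b / sqrt NN)"
    by (simp add: divide_inverse algebra_simps)
  finally show ?thesis .
qed

lemma final_ineq:
  assumes g: "0 \<le> \<gamma>" "\<gamma> < 1" and SP: "SP1 + SP2 > 1" and gS: "\<gamma> * (SP1 + SP2) < 1"
  shows "L_R * cU / (1 - \<gamma>) + \<gamma> * (SR1 * FJ + SR2 * FM) / (1 - \<gamma>)
      + (SR1 + SR2) * (SP1 * FJ + SP2 * FM) / (SP1 + SP2 - 1) * (\<gamma> / (1 - \<gamma> * (SP1 + SP2)) - \<gamma> / (1 - \<gamma>))
    \<le> (M_R + L_R) / (1 - \<gamma>) * sqrt (real CARD('u)) * (1 / sqrt NN)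
      + sqrt (real CARD('x) * real CARD('u)) * (\<gamma> * (2 + L_P) / (1 - \<gamma>)) * (SR1 / NN * SN + SR2 / sqrt NN)
      + (2 + L_P) * ((SR1 + SR2) / (SP1 + SP2 - 1)) * sqrt (real CARD('x) * real CARD('u))
         * (\<gamma> / (1 - \<gamma> * (SP1 + SP2)) - \<gamma> / (1 - \<gamma>)) * (SP1 / NN * SN + SP2 / sqrt NN)"
proof -
  let ?C = "(2 + L_P) * sqrt (real CARD('x) * real CARD('u))"
  let ?W = "\<gamma> / (1 - \<gamma> * (SP1 + SP2)) - \<gamma> / (1 - \<gamma>)"
  have W0: "?W \<ge> 0"
  proof -
    have "1 - \<gamma> * (SP1 + SP2) \<le> 1 - \<gamma>" using g SP by (simp add: mult_left_mono[of 1 "SP1 + SP2" \<gamma>, simplified])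
    moreover have "0 < 1 - \<gamma> * (SP1 + SP2)" using gS by simp
    ultimately have "\<gamma> / (1 - \<gamma>) \<le> \<gamma> / (1 - \<gamma> * (SP1 + SP2))"
      using g by (intro divide_left_mono) auto
    then show ?thesis by simp
  qed
  have g1: "1 - \<gamma> > 0" using g by simp
  have t1: "L_R * cU / (1 - \<gamma>) \<le> (M_R + L_R) / (1 - \<gamma>) * sqrt (real CARD('u)) * (1 / sqrt NN)"
  proof -
    have "L_R * cU \<le> (M_R + L_R) * cU" using MR0 NN_pos by (intro mult_right_mono) (auto simp: cU_def)
    then have "L_R * cU / (1 - \<gamma>) \<le> (M_R + L_R) * cU / (1 - \<gamma>)" using g1 by (intro divide_right_mono) auto
    also have "\<dots> = (M_R + L_R) / (1 - \<gamma>) * sqrt (real CARD('u)) * (1 / sqrt NN)" by (simp add: cU_def)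
    finally show ?thesis .
  qed
  have t2: "\<gamma> * (SR1 * FJ + SR2 * FM) / (1 - \<gamma>)
      \<le> sqrt (real CARD('x) * real CARD('u)) * (\<gamma> * (2 + L_P) / (1 - \<gamma>)) * (SR1 / NN * SN + SR2 / sqrt NN)"
  proof -
    have "\<gamma> * (SR1 * FJ + SR2 * FM) / (1 - \<gamma>) = (\<gamma> / (1 - \<gamma>)) * (SR1 * FJ + SR2 * FM)" by simp
    also have "\<dots> \<le> (\<gamma> / (1 - \<gamma>)) * (?C * (SR1 / NN * SN + SR2 / sqrt NN))"
      using g g1 SP_nonneg by (intro mult_left_mono comb_le) auto
    also have "\<dots> = sqrt (real CARD('x) * real CARD('u)) * (\<gamma> * (2 + L_P) / (1 - \<gamma>)) * (SR1 / NN * SN + SR2 / sqrt NN)"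
      by (simp add: divide_inverse algebra_simps)
    finally show ?thesis .
  qed
  have t3: "(SR1 + SR2) * (SP1 * FJ + SP2 * FM) / (SP1 + SP2 - 1) * ?W
      \<le> (2 + L_P) * ((SR1 + SR2) / (SP1 + SP2 - 1)) * sqrt (real CARD('x) * real CARD('u)) * ?W * (SP1 / NN * SN + SP2 / sqrt NN)"
  proof -
    have f0: "(SR1 + SR2) / (SP1 + SP2 - 1) * ?W \<ge> 0" using SP_nonneg SP W0 by auto
    have "(SR1 + SR2) * (SP1 * FJ + SP2 * FM) / (SP1 + SP2 - 1) * ?W = ((SR1 + SR2) / (SP1 + SP2 - 1) * ?W) * (SP1 * FJ + SP2 * FM)"
      by simp
    also have "\<dots> \<le> ((SR1 + SR2) / (SP1 + SP2 - 1) * ?W) * (?C * (SP1 / NN * SN + SP2 / sqrt NN))"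
      using f0 SP_nonneg by (intro mult_left_mono comb_le) auto
    also have "\<dots> = (2 + L_P) * ((SR1 + SR2) / (SP1 + SP2 - 1)) * sqrt (real CARD('x) * real CARD('u)) * ?W * (SP1 / NN * SN + SP2 / sqrt NN)"
      by (simp only: mult.assoc mult.commute mult.left_commute)
    finally show ?thesis .
  qed
  show ?thesis using t1 t2 t3 by linarith
qed

end

theorem theorem3:
  fixes K :: nat and N :: "nat \<Rightarrow> nat"
    and r :: "nat \<Rightarrow> 'x::finite \<Rightarrow> 'u::finite \<Rightarrow> 'x pmf \<Rightarrow> 'u pmf \<Rightarrow> real"
    and P :: "nat \<Rightarrow> 'x \<Rightarrow> 'u \<Rightarrow> 'x pmf \<Rightarrow> 'u pmf \<Rightarrow> 'x pmf"
    and pol :: "nat \<Rightarrow> nat \<Rightarrow> 'x \<Rightarrow> 'x pmf \<Rightarrow> 'u pmf"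
    and x0 :: "nat \<times> nat \<Rightarrow> 'x" and mu0 :: "('x \<times> nat) pmf"
    and M_R L_R L_P L_Q \<gamma> :: real
  assumes K_pos: "K \<ge> 1"
    and N_pos: "\<And>k. k < K \<Longrightarrow> N k \<ge> 1"
    and consts_pos: "M_R > 0" "L_R > 0" "L_P > 0" "L_Q > 0"
    and gamma: "0 \<le> \<gamma>" "\<gamma> < 1"
    and r_bound: "\<And>k x u m n. k < K \<Longrightarrow> \<bar>r k x u m n\<bar> \<le> M_R"
    and r_lip: "\<And>k x u m1 n1 m2 n2. k < K \<Longrightarrow>
        \<bar>r k x u m1 n1 - r k x u m2 n2\<bar> \<le> L_R * (l1 m1 m2 + l1 n1 n2)"
    and P_lip: "\<And>k x u m1 n1 m2 n2. k < K \<Longrightarrow>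
        l1 (P k x u m1 n1) (P k x u m2 n2) \<le> L_P * (l1 m1 m2 + l1 n1 n2)"
    and pol_lip: "\<And>t k x m1 m2. k < K \<Longrightarrow>
        l1 (pol t k x m1) (pol t k x m2) \<le> L_Q * l1 m1 m2"
    and mu0_def: "mu0 = emp (agents K N) (\<lambda>a. (x0 a, snd a))"
    and contr: "\<gamma> * ((1 + L_Q) + L_P * (2 + L_Q)) < 1"
  shows "\<bar>emp_value K N r P pol \<gamma> x0 - mf_value K r P pol \<gamma> mu0\<bar> \<le>
     (let S_R = M_R * (1 + L_Q) + L_R * (2 + L_Q);
          S_P = (1 + L_Q) + L_P * (2 + L_Q);
          C_R = M_R + L_R; C_P = 2 + L_P;
          S_R' = M_R + L_R; S_R'' = M_R * L_Q + L_R * (1 + L_Q);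
          S_P' = 1 + L_P; S_P'' = L_Q + L_P * (1 + L_Q);
          Np = real (Npop K N);
          SN = (\<Sum>k<K. sqrt (real (N k)));
          X = real CARD('x); U = real CARD('u)
      in C_R / (1 - \<gamma>) * sqrt U * (1 / sqrt Np)
         + sqrt (X * U) * (\<gamma> * C_P / (1 - \<gamma>)) * (S_R' / Np * SN + S_R'' / sqrt Np)
         + C_P * (S_R / (S_P - 1)) * sqrt (X * U) * (\<gamma> / (1 - \<gamma> * S_P) - \<gamma> / (1 - \<gamma>))
             * (S_P' / Np * SN + S_P'' / sqrt Np))"
proof -
  interpret m: mfsys K N r P pol M_R L_R L_P L_Q
    using K_pos N_pos consts_pos r_bound r_lip P_lip pol_lip by unfold_locales auto
  have mu0: "mu0 = m.empJ x0" by (simp add: mu0_def m.empJ_def)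
  have SPe: "m.SP1 + m.SP2 = (1 + L_Q) + L_P * (2 + L_Q)" by (simp add: m.SP1_def m.SP2_def algebra_simps)
  have SRe: "m.SR1 + m.SR2 = M_R * (1 + L_Q) + L_R * (2 + L_Q)" by (simp add: m.SR1_def m.SR2_def algebra_simps)
  have SPgt: "m.SP1 + m.SP2 > 1"
  proof -
    have "L_P * (2 + L_Q) > 0" using consts_pos by simp
    then show ?thesis unfolding SPe using consts_pos by linarith
  qed
  have gS: "\<gamma> * (m.SP1 + m.SP2) < 1" using contr SPe by simp
  have NNe: "m.NN = real (Npop K N)" by (simp add: m.NN_def m.cardA)
  have A: "\<bar>emp_value K N r P pol \<gamma> x0 - mf_value K r P pol \<gamma> mu0\<bar> \<le>
     L_R * m.cU / (1 - \<gamma>) + \<gamma> * (m.SR1 * m.FJ + m.SR2 * m.FM) / (1 - \<gamma>)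
      + (m.SR1 + m.SR2) * (m.SP1 * m.FJ + m.SP2 * m.FM) / (m.SP1 + m.SP2 - 1) * (\<gamma> / (1 - \<gamma> * (m.SP1 + m.SP2)) - \<gamma> / (1 - \<gamma>))"
    unfolding mu0 by (rule m.main_bound[OF gamma SPgt gS])
  note B = m.final_ineq[OF gamma SPgt gS]
  note C = order_trans[OF A B]
  show ?thesis
    using C unfolding Let_def SRe SPe unfolding m.SR1_def m.SR2_def m.SP1_def m.SP2_def NNe m.SN_def .
qed


end
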